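(* Let $W=\partial_u+v^p\partial_v$ and, for a smooth function $\phi$ on the interior, let $\tilde K^W(\phi)=-\frac{2}{r}(v^p+1)\,\partial_v\phi\,\partial_u\phi$. Fix $u_{\text{✄}}$ in the range of $u_\gamma$. There exist constants $\delta_1=\delta_1(\epsilon)$ and $\delta_2=\delta_2(v_* )>0$, independent of $\phi$, with $\delta_1\to0$ as $\epsilon\to0$ and $\delta_2\to0$ as $v_*\to\infty$, such that for every smooth $\phi$, every $v_*\ge v_\gamma(u_{\text{✄}})$, every $\hat v>v_*$ and all $u_1<u_2$ with $u_{\text{✄}}\le u_1$ and $0<u_2-u_1\le\epsilon$, setting $\mathcal R_{V_1}=[u_1,u_2]\times[v_*,\hat v]\times\mathbb S^2$, $$\int_{\mathcal R_{V_1}}|\tilde K^W(\phi)|\,dVol\le\delta_1\sup_{u_1\le\bar u\le u_2}F^W_{u=\bar u}[v_*,\hat v]+\delta_2\sup_{v_*\le\bar v\le\hat v}F^W_{v=\bar v}[u_1,u_2].$$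
   Context: Fix $M>|e|>0$ and let $r_\pm=M\pm\sqrt{M^2-e^2}$. The black hole interior of the maximal globally hyperbolic development $(\mathcal M,g)$ of two-ended subextremal Reissner–Nordström data is covered by Eddington–Finkelstein double null coordinates $(u,v)\in\mathbb R^2$ together with spherical coordinates $(\theta,\vartheta)\in\mathbb S^2$ ($\vartheta$ the azimuthal angle), in which $g=-\Omega^2(u,v)\,du\,dv+r^2(u,v)(d\theta^2+\sin^2\theta\,d\vartheta^2)$, where $r\in(r_-,r_+)$, $\Omega^2=-(1-\frac{2M}{r}+\frac{e^2}{r^2})>0$, $\partial_u r=\partial_v r=-\Omega^2/2$, and $\frac{\partial_u\Omega}{\Omega}=\frac{\partial_v\Omega}{\Omega}=\frac{1}{2r^2}(M-\frac{e^2}{r})$. The function $r$ depends only on $r^*:=(u+v)/2$ and decreases from $r_+$ (as $r^*\to-\infty$) to $r_-$ (as $r^*\to+\infty$). For a function $\psi$, $|\nabla\!\!\!/\,\psi|^2=r^{-2}[(\partial_\theta\psi)^2+\sin^{-2}\theta(\partial_\vartheta\psi)^2]$ and $d\sigma$ is the standard measure on the unit sphere. Fix $p>1$. Fix $r_{blue}\in(r_-,r_+)$ so close to $r_-$ that $M-e^2/r<0$ for $r_-<r\le r_{blue}$ and $r^*_{blue}>0$, where $r^*_{blue}$ is the value of $r^*$ on $\{r=r_{blue}\}$; fix $\beta>0$ with $-\partial_u\Omega/\Omega=-\partial_v\Omega/\Omega\ge\beta$ on $\{r_-<r\le r_{blue}\}$. Fix $\alpha>\max\{1,(p+1)/\beta\}$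 with $\alpha(2-\log 2\alpha)>2r^*_{blue}+1$. Let $H(u,v)=u+v-\alpha\log v-2r^*_{blue}$ and $\gamma=\{H=0,\ v>2\alpha\}\times\mathbb S^2$; for $v>2\alpha$ let $u_\gamma(v)$ be the unique $u$ with $(u,v)\in\gamma$, and for $u$ in the range of $u_\gamma$ let $v_\gamma(u)$ be the corresponding $v$. For a vector field $X=X^u\partial_u+X^v\partial_v$ the null fluxes are $F^X_{u=\bar u}[v_1,v_2]=\int_{\mathbb S^2}\int_{v_1}^{v_2}\big[X^v(\partial_v\phi)^2+\frac{\Omega^2}{4}X^u|\nabla\!\!\!/\phi|^2\big](\bar u,v,\cdot)\,r^2\,dv\,d\sigma$ and $F^X_{v=\bar v}[u_1,u_2]=\int_{\mathbb S^2}\int_{u_1}^{u_2}\big[X^u(\partial_u\phi)^2+\frac{\Omega^2}{4}X^v|\nabla\!\!\!/\phi|^2\big](u,\bar v,\cdot)\,r^2\,du\,d\sigma$. The spacetime volume form is $dVol=\frac{r^2\Omega^2}{2}\,du\,dv\,d\sigma$. *)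

theory Defs
  imports "HOL-Analysis.Analysis"
begin

fun Ck :: "nat \<Rightarrow> ('a::euclidean_space \<Rightarrow> real) set" where
  "Ck 0 = {f. continuous_on UNIV f}"
| "Ck (Suc k) = {f. \<exists>f'. (\<forall>x. (f has_derivative f' x) (at x)) \<and>
                        (\<forall>i\<in>Basis. (\<lambda>x. f' x i) \<in> Ck k)}"

definition smooth_fun :: "('a::euclidean_space \<Rightarrow> real) \<Rightarrow> bool" where
  "smooth_fun f \<longleftrightarrow> (\<forall>k. f \<in> Ck k)"

definition rminus :: "real \<Rightarrow> real \<Rightarrow> real" where
  "rminus M e = M - sqrt (M^2 - e^2)"
definition rplus :: "real \<Rightarrow> real \<Rightarrow> real" where
  "rplus M e = M + sqrt (M^2 - e^2)"

definition Dfun :: "real \<Rightarrow> real \<Rightarrow> real \<Rightarrow> real" where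
  "Dfun M e \<rho> = 1 - 2*M/\<rho> + e^2/\<rho>^2"

definition Om2 :: "real \<Rightarrow> real \<Rightarrow> real \<Rightarrow> real" where
  "Om2 M e \<rho> = - Dfun M e \<rho>"

text \<open>The area radius r(u,v) = R(r*), r* = (u+v)/2, where R is the profile of r.\<close>
definition rr :: "(real \<Rightarrow> real) \<Rightarrow> real \<Rightarrow> real \<Rightarrow> real" where
  "rr R u v = R ((u+v)/2)"

definition rstar_of :: "(real \<Rightarrow> real) \<Rightarrow> real \<Rightarrow> real" where
  "rstar_of R \<rho> = (THE s. R s = \<rho>)"

definition u_gamma :: "real \<Rightarrow> real \<Rightarrow> real \<Rightarrow> real" where
  "u_gamma \<alpha> rsb v = \<alpha> * ln v + 2*rsb - v"

definition v_gamma :: "real \<Rightarrow> real \<Rightarrow> real \<Rightarrow> real" where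
  "v_gamma \<alpha> rsb u = (THE v. 2*\<alpha> < v \<and> u_gamma \<alpha> rsb v = u)"

text \<open>A smooth function phi on R^2 x S^2 is given as (the restriction of) a smooth
  function Phi on R^2 x R^3; its expression in (u,v,theta,vartheta).\<close>
definition sph :: "((real \<times> real \<times> real \<times> real \<times> real) \<Rightarrow> real)
    \<Rightarrow> real \<Rightarrow> real \<Rightarrow> real \<Rightarrow> real \<Rightarrow> real" where
  "sph \<Phi> u v \<theta> \<phi> = \<Phi> (u, v, sin \<theta> * cos \<phi>, sin \<theta> * sin \<phi>, cos \<theta>)"

definition pu :: "(real \<Rightarrow> real \<Rightarrow> real \<Rightarrow> real \<Rightarrow> real) \<Rightarrow> real \<Rightarrow> real \<Rightarrow> real \<Rightarrow> real \<Rightarrow> real" where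
  "pu \<psi> u v \<theta> \<phi> = deriv (\<lambda>x. \<psi> x v \<theta> \<phi>) u"
definition pv :: "(real \<Rightarrow> real \<Rightarrow> real \<Rightarrow> real \<Rightarrow> real) \<Rightarrow> real \<Rightarrow> real \<Rightarrow> real \<Rightarrow> real \<Rightarrow> real" where
  "pv \<psi> u v \<theta> \<phi> = deriv (\<lambda>x. \<psi> u x \<theta> \<phi>) v"
definition ptheta :: "(real \<Rightarrow> real \<Rightarrow> real \<Rightarrow> real \<Rightarrow> real) \<Rightarrow> real \<Rightarrow> real \<Rightarrow> real \<Rightarrow> real \<Rightarrow> real" where
  "ptheta \<psi> u v \<theta> \<phi> = deriv (\<lambda>x. \<psi> u v x \<phi>) \<theta>"
definition pvartheta :: "(real \<Rightarrow> real \<Rightarrow> real \<Rightarrow> real \<Rightarrow> real) \<Rightarrow> real \<Rightarrow> real \<Rightarrow> real \<Rightarrow> real \<Rightarrow> real" where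
  "pvartheta \<psi> u v \<theta> \<phi> = deriv (\<lambda>x. \<psi> u v \<theta> x) \<phi>"

definition angsq :: "(real \<Rightarrow> real) \<Rightarrow> (real \<Rightarrow> real \<Rightarrow> real \<Rightarrow> real \<Rightarrow> real) \<Rightarrow> real \<Rightarrow> real \<Rightarrow> real \<Rightarrow> real \<Rightarrow> real" where
  "angsq R \<psi> u v \<theta> \<phi> =
     (1 / (rr R u v)^2) * ((ptheta \<psi> u v \<theta> \<phi>)^2 + (pvartheta \<psi> u v \<theta> \<phi>)^2 / (sin \<theta>)^2)"

definition sph_int :: "(real \<Rightarrow> real \<Rightarrow> real) \<Rightarrow> real" where
  "sph_int f = integral {0..pi} (\<lambda>\<theta>. integral {0..2*pi} (\<lambda>\<phi>. f \<theta> \<phi> * sin \<theta>))"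

text \<open>Null fluxes of a vector field X = Xu d_u + Xv d_v.\<close>
definition flux_u :: "real \<Rightarrow> real \<Rightarrow> (real \<Rightarrow> real) \<Rightarrow> (real \<Rightarrow> real \<Rightarrow> real) \<Rightarrow> (real \<Rightarrow> real \<Rightarrow> real)
    \<Rightarrow> (real \<Rightarrow> real \<Rightarrow> real \<Rightarrow> real \<Rightarrow> real) \<Rightarrow> real \<Rightarrow> real \<Rightarrow> real \<Rightarrow> real" where
  "flux_u M e R Xu Xv \<psi> ub v1 v2 =
     sph_int (\<lambda>\<theta> \<phi>. integral {v1..v2} (\<lambda>v.
        (Xv ub v * (pv \<psi> ub v \<theta> \<phi>)^2
          + Om2 M e (rr R ub v) / 4 * Xu ub v * angsq R \<psi> ub v \<theta> \<phi>) * (rr R ub v)^2))"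

definition flux_v :: "real \<Rightarrow> real \<Rightarrow> (real \<Rightarrow> real) \<Rightarrow> (real \<Rightarrow> real \<Rightarrow> real) \<Rightarrow> (real \<Rightarrow> real \<Rightarrow> real)
    \<Rightarrow> (real \<Rightarrow> real \<Rightarrow> real \<Rightarrow> real \<Rightarrow> real) \<Rightarrow> real \<Rightarrow> real \<Rightarrow> real \<Rightarrow> real" where
  "flux_v M e R Xu Xv \<psi> vb u1 u2 =
     sph_int (\<lambda>\<theta> \<phi>. integral {u1..u2} (\<lambda>u.
        (Xu u vb * (pu \<psi> u vb \<theta> \<phi>)^2
          + Om2 M e (rr R u vb) / 4 * Xv u vb * angsq R \<psi> u vb \<theta> \<phi>) * (rr R u vb)^2))"

definition vol_int :: "real \<Rightarrow> real \<Rightarrow> (real \<Rightarrow> real) \<Rightarrow> (real \<Rightarrow> real \<Rightarrow> real \<Rightarrow> real \<Rightarrow> real)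
    \<Rightarrow> real \<Rightarrow> real \<Rightarrow> real \<Rightarrow> real \<Rightarrow> real" where
  "vol_int M e R f u1 u2 v1 v2 =
     sph_int (\<lambda>\<theta> \<phi>. integral {u1..u2} (\<lambda>u. integral {v1..v2} (\<lambda>v.
        f u v \<theta> \<phi> * (rr R u v)^2 * Om2 M e (rr R u v) / 2)))"

definition W_u :: "real \<Rightarrow> real \<Rightarrow> real" where "W_u u v = 1"
definition W_v :: "real \<Rightarrow> real \<Rightarrow> real \<Rightarrow> real" where "W_v p u v = v powr p"

definition KtildeW :: "(real \<Rightarrow> real) \<Rightarrow> real \<Rightarrow> (real \<Rightarrow> real \<Rightarrow> real \<Rightarrow> real \<Rightarrow> real)
    \<Rightarrow> real \<Rightarrow> real \<Rightarrow> real \<Rightarrow> real \<Rightarrow> real" where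
  "KtildeW R p \<psi> u v \<theta> \<phi> =
     - (2 / rr R u v) * (v powr p + 1) * pv \<psi> u v \<theta> \<phi> * pu \<psi> u v \<theta> \<phi>"

end

theory Submission
  imports Defs
begin


lemma cbox_real_eq: "cbox (a::real) b = {a..b}" by simp

lemma P1:
  fixes f :: "real \<Rightarrow> real \<Rightarrow> real \<Rightarrow> real \<Rightarrow> real"
  assumes "continuous_on (A \<times> {c..d} \<times> T) (\<lambda>(x,y,t,s). f x y t s)"
  shows "continuous_on (A \<times> T) (\<lambda>(x,t,s). integral {c..d} (\<lambda>y. f x y t s))"
proof -
  have "continuous_on ((A \<times> T) \<times> cbox c d) (\<lambda>(z,y). f (fst z) y (fst (snd z)) (snd (snd z)))"
  proof -
    have "continuous_on ((A \<times> T) \<times> cbox c d) (\<lambda>w. (\<lambda>(x,y,t,s). f x y t s) (fst (fst w), snd w, fst (snd (fst w)), snd (snd (fst w))))"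
      by (rule continuous_on_compose2[OF assms]) (auto intro!: continuous_intros)
    then show ?thesis by (simp add: case_prod_beta)
  qed
  from integral_continuous_on_param[OF this]
  show ?thesis by (simp add: case_prod_beta)
qed

lemma P2:
  fixes g :: "real \<Rightarrow> real \<Rightarrow> real \<Rightarrow> real"
  assumes "continuous_on ({a..b} \<times> T) (\<lambda>(x,t,s). g x t s)"
  shows "continuous_on T (\<lambda>(t,s). integral {a..b} (\<lambda>x. g x t s))"
proof -
  have "continuous_on (T \<times> cbox a b) (\<lambda>(z,x). g x (fst z) (snd z))"
  proof -
    have "continuous_on (T \<times> cbox a b) (\<lambda>w. (\<lambda>(x,t,s). g x t s) (snd w, fst (fst w), snd (fst w)))"
      by (rule continuous_on_compose2[OF assms]) (auto intro!: continuous_intros)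
    then show ?thesis by (simp add: case_prod_beta)
  qed
  from integral_continuous_on_param[OF this]
  show ?thesis by (simp add: case_prod_beta)
qed

lemma P3:
  fixes h :: "'a::topological_space \<Rightarrow> real \<Rightarrow> real"
  assumes "continuous_on (A \<times> {c..d}) (\<lambda>(x,y). h x y)"
  shows "continuous_on A (\<lambda>x. integral {c..d} (h x))"
  using integral_continuous_on_param[of A c d h] assms by simp

definition TT :: "(real \<times> real) set" where "TT = {0..pi} \<times> {0..2*pi}"

lemma SI_inner_cont:
  fixes A :: "'a::metric_space set" and g :: "'a \<Rightarrow> real \<Rightarrow> real \<Rightarrow> real"
  assumes "continuous_on (A \<times> TT) (\<lambda>(x,t,s). g x t s)"
  shows "continuous_on (A \<times> {0..pi}) (\<lambda>(x,t). integral {0..2*pi} (\<lambda>s. g x t s * sin t))"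
proof -
  have "continuous_on ((A \<times> {0..pi}) \<times> {0..2*pi}) (\<lambda>(z,s). g (fst z) (snd z) s * sin (snd z))"
  proof -
    have "continuous_on ((A \<times> {0..pi}) \<times> {0..2*pi}) (\<lambda>w. (\<lambda>(x,t,s). g x t s) (fst (fst w), snd (fst w), snd w))"
      by (rule continuous_on_compose2[OF assms]) (auto simp: TT_def intro!: continuous_intros)
    then have "continuous_on ((A \<times> {0..pi}) \<times> {0..2*pi}) (\<lambda>w. (\<lambda>(x,t,s). g x t s) (fst (fst w), snd (fst w), snd w) * sin (snd (fst w)))"
      by (rule continuous_on_mult) (intro continuous_intros)
    then show ?thesis by (simp add: case_prod_beta)
  qed
  from P3[OF this] show ?thesis by (simp add: case_prod_beta)
qed

lemma SI_param:
  fixes A :: "'a::metric_space set" and g :: "'a \<Rightarrow> real \<Rightarrow> real \<Rightarrow> real"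
  assumes "continuous_on (A \<times> TT) (\<lambda>(x,t,s). g x t s)"
  shows "continuous_on A (\<lambda>x. sph_int (g x))"
  unfolding sph_int_def
  using P3[OF SI_inner_cont[OF assms]] by simp

lemma SI_cont1:
  fixes g :: "real \<Rightarrow> real \<Rightarrow> real"
  assumes "continuous_on TT (\<lambda>(t,s). g t s)"
  shows "continuous_on {0..pi} (\<lambda>t. integral {0..2*pi} (\<lambda>s. g t s * sin t))"
proof -
  have "continuous_on ({0..pi} \<times> {0..2*pi}) (\<lambda>(t,s). g t s * sin t)"
    using assms unfolding TT_def
    by (auto simp: case_prod_beta intro!: continuous_intros)
  from P3[OF this] show ?thesis by simp
qed

lemma SI_mono:
  fixes g1 g2 :: "real \<Rightarrow> real \<Rightarrow> real"
  assumes c1: "continuous_on TT (\<lambda>(t,s). g1 t s)" and c2: "continuous_on TT (\<lambda>(t,s). g2 t s)"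
    and le: "\<And>t s. t \<in> {0..pi} \<Longrightarrow> s \<in> {0..2*pi} \<Longrightarrow> g1 t s \<le> g2 t s"
  shows "sph_int g1 \<le> sph_int g2"
  unfolding sph_int_def
proof (rule integral_le)
  show "(\<lambda>t. integral {0..2*pi} (\<lambda>s. g1 t s * sin t)) integrable_on {0..pi}"
    using SI_cont1[OF c1] integrable_continuous_interval by blast
  show "(\<lambda>t. integral {0..2*pi} (\<lambda>s. g2 t s * sin t)) integrable_on {0..pi}"
    using SI_cont1[OF c2] integrable_continuous_interval by blast
  fix t assume t: "t \<in> {0..pi}"
  have st: "sin t \<ge> 0" using t by (auto intro!: sin_ge_zero)
  have ct: "continuous_on {0..2*pi} (\<lambda>s. g t s * sin t)" if "continuous_on TT (\<lambda>(t,s). g t s)" for g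
  proof -
    have "continuous_on {0..2*pi} (\<lambda>s. (\<lambda>(t,s). g t s) (t, s))"
      by (rule continuous_on_compose2[OF that]) (use t in \<open>auto simp: TT_def intro!: continuous_intros\<close>)
    then show ?thesis by (auto intro!: continuous_intros)
  qed
  show "integral {0..2*pi} (\<lambda>s. g1 t s * sin t) \<le> integral {0..2*pi} (\<lambda>s. g2 t s * sin t)"
    apply (rule integral_le)
    using ct[OF c1] ct[OF c2] integrable_continuous_interval apply blast+
    using le[OF t] st by (simp add: mult_right_mono)
qed

lemma swap_real:
  fixes f :: "real \<Rightarrow> real \<Rightarrow> real"
  assumes "continuous_on ({a..b} \<times> {c..d}) (\<lambda>(x,y). f x y)"
  shows "integral {a..b} (\<lambda>x. integral {c..d} (f x)) = integral {c..d} (\<lambda>y. integral {a..b} (\<lambda>x. f x y))"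
  using integral_swap_continuous[of a c b d f] assms by (simp add: cbox_Pair_eq)

lemma swap_cont:
  fixes f :: "real \<Rightarrow> real \<Rightarrow> real"
  assumes "continuous_on (A \<times> B) (\<lambda>(x,y). f x y)"
  shows "continuous_on (B \<times> A) (\<lambda>(y,x). f x y)"
proof -
  have "continuous_on (B \<times> A) (\<lambda>w. (\<lambda>(x,y). f x y) (snd w, fst w))"
    by (rule continuous_on_compose2[OF assms]) (auto intro!: continuous_intros)
  then show ?thesis by (simp add: case_prod_beta)
qed

lemma SI_swap:
  fixes g :: "real \<Rightarrow> real \<Rightarrow> real \<Rightarrow> real"
  assumes cg: "continuous_on ({a..b} \<times> TT) (\<lambda>(x,t,s). g x t s)"
  shows "sph_int (\<lambda>t s. integral {a..b} (\<lambda>x. g x t s)) = integral {a..b} (\<lambda>x. sph_int (g x))"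
proof -
  have step1: "integral {0..2*pi} (\<lambda>s. integral {a..b} (\<lambda>x. g x t s) * sin t)
      = integral {a..b} (\<lambda>x. integral {0..2*pi} (\<lambda>s. g x t s * sin t))" if t: "t \<in> {0..pi}" for t
  proof -
    have "integral {0..2*pi} (\<lambda>s. integral {a..b} (\<lambda>x. g x t s) * sin t)
        = integral {0..2*pi} (\<lambda>s. integral {a..b} (\<lambda>x. g x t s * sin t))" by simp
    also have "\<dots> = integral {a..b} (\<lambda>x. integral {0..2*pi} (\<lambda>s. g x t s * sin t))"
    proof (rule swap_real[where a=0 and b="2*pi" and c=a and d=b and f="\<lambda>s x. g x t s * sin t"])
      have "continuous_on ({0..2*pi} \<times> {a..b}) (\<lambda>w. (\<lambda>(x,t,s). g x t s) (snd w, t, fst w))"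
        by (rule continuous_on_compose2[OF cg]) (use t in \<open>auto simp: TT_def intro!: continuous_intros\<close>)
      then have "continuous_on ({0..2*pi} \<times> {a..b}) (\<lambda>w. (\<lambda>(x,t,s). g x t s) (snd w, t, fst w) * sin t)"
        by (intro continuous_on_mult continuous_on_const)
      then show "continuous_on ({0..2*pi} \<times> {a..b}) (\<lambda>(s, x). g x t s * sin t)"
        by (simp add: case_prod_beta)
    qed
    finally show ?thesis .
  qed
  have "sph_int (\<lambda>t s. integral {a..b} (\<lambda>x. g x t s))
      = integral {0..pi} (\<lambda>t. integral {a..b} (\<lambda>x. integral {0..2*pi} (\<lambda>s. g x t s * sin t)))"
    unfolding sph_int_def by (rule integral_cong) (use step1 in auto)
  also have "\<dots> = integral {a..b} (\<lambda>x. integral {0..pi} (\<lambda>t. integral {0..2*pi} (\<lambda>s. g x t s * sin t)))"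
    by (rule swap_real) (rule swap_cont[OF SI_inner_cont[OF cg]])
  also have "\<dots> = integral {a..b} (\<lambda>x. sph_int (g x))"
    unfolding sph_int_def ..
  finally show ?thesis .
qed


lemma deriv_from_has_derivative:
  fixes g :: "real \<Rightarrow> real"
  assumes "(g has_derivative g') (at x)"
  shows "deriv g x = g' 1"
proof -
  have lin: "linear g'" using assms has_derivative_linear by blast
  have "g' = (\<lambda>h. g' 1 * h)"
  proof
    fix h :: real
    have "g' h = g' (h *\<^sub>R 1)" by simp
    also have "\<dots> = h *\<^sub>R g' 1" using lin by (simp only: linear_scale)
    finally show "g' h = g' 1 * h" by simp
  qed
  with assms have "(g has_field_derivative g' 1) (at x)"
    by (simp add: has_field_derivative_def)
  then show ?thesis by (rule DERIV_imp_deriv)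
qed

lemma lin5:
  fixes L :: "real \<times> real \<times> real \<times> real \<times> real \<Rightarrow> real"
  assumes "linear L"
  shows "L (a,b,c,d,e) = a * L (1,0,0,0,0) + b * L (0,1,0,0,0) + c * L (0,0,1,0,0) + d * L (0,0,0,1,0) + e * L (0,0,0,0,1)"
proof -
  have "(a,b,c,d,e) = a *\<^sub>R (1,0,0,0,0) + b *\<^sub>R (0,1,0,0,0) + c *\<^sub>R (0,0,1,0,0) + d *\<^sub>R (0,0,0,1,0) + e *\<^sub>R (0::real,0::real,0::real,0::real,1::real)"
    by simp
  then have "L (a,b,c,d,e) = L (a *\<^sub>R (1,0,0,0,0) + b *\<^sub>R (0,1,0,0,0) + c *\<^sub>R (0,0,1,0,0) + d *\<^sub>R (0,0,0,1,0) + e *\<^sub>R (0::real,0::real,0::real,0::real,1::real))"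
    by simp
  also have "\<dots> = a * L (1,0,0,0,0) + b * L (0,1,0,0,0) + c * L (0,0,1,0,0) + d * L (0,0,0,1,0) + e * L (0,0,0,0,1)"
    by (simp only: linear_add[OF assms] linear_scale[OF assms] real_scaleR_def)
  finally show ?thesis .
qed

lemma sph_derivs:
  fixes \<Phi> :: "real \<times> real \<times> real \<times> real \<times> real \<Rightarrow> real"
  assumes "smooth_fun \<Phi>"
  obtains D1 D2 D3 D4 D5 :: "real \<times> real \<times> real \<times> real \<times> real \<Rightarrow> real" where
    "continuous_on UNIV D1" "continuous_on UNIV D2" "continuous_on UNIV D3"
    "continuous_on UNIV D4" "continuous_on UNIV D5"
    "\<And>u v t s. pu (sph \<Phi>) u v t s = D1 (u, v, sin t * cos s, sin t * sin s, cos t)"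
    "\<And>u v t s. pv (sph \<Phi>) u v t s = D2 (u, v, sin t * cos s, sin t * sin s, cos t)"
    "\<And>u v t s. ptheta (sph \<Phi>) u v t s = cos t * cos s * D3 (u, v, sin t * cos s, sin t * sin s, cos t)
        + cos t * sin s * D4 (u, v, sin t * cos s, sin t * sin s, cos t) - sin t * D5 (u, v, sin t * cos s, sin t * sin s, cos t)"
    "\<And>u v t s. pvartheta (sph \<Phi>) u v t s = sin t * (- sin s * D3 (u, v, sin t * cos s, sin t * sin s, cos t)
        + cos s * D4 (u, v, sin t * cos s, sin t * sin s, cos t))"
proof -
  have "\<Phi> \<in> Ck (Suc 0)" using assms unfolding smooth_fun_def by blast
  then obtain f' where fd: "\<And>x. (\<Phi> has_derivative f' x) (at x)"
    and fc: "\<And>i. i \<in> Basis \<Longrightarrow> continuous_on UNIV (\<lambda>x. f' x i)"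
    by (simp only: Ck.simps mem_Collect_eq) blast
  have lin: "linear (f' x)" for x using fd has_derivative_linear by blast
  define D1 where "D1 x = f' x (1,0,0,0,0)" for x
  define D2 where "D2 x = f' x (0,1,0,0,0)" for x
  define D3 where "D3 x = f' x (0,0,1,0,0)" for x
  define D4 where "D4 x = f' x (0,0,0,1,0)" for x
  define D5 where "D5 x = f' x (0,0,0,0,1)" for x
  have B: "((1::real),(0::real),(0::real),(0::real),(0::real)) \<in> Basis"
    "((0::real),(1::real),(0::real),(0::real),(0::real)) \<in> Basis"
    "((0::real),(0::real),(1::real),(0::real),(0::real)) \<in> Basis"
    "((0::real),(0::real),(0::real),(1::real),(0::real)) \<in> Basis"
    "((0::real),(0::real),(0::real),(0::real),(1::real)) \<in> Basis"
    by (simp_all add: Basis_prod_def zero_prod_def)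
  show ?thesis
  proof
    show "continuous_on UNIV D1" unfolding D1_def using fc[OF B(1)] by simp
    show "continuous_on UNIV D2" unfolding D2_def using fc[OF B(2)] by simp
    show "continuous_on UNIV D3" unfolding D3_def using fc[OF B(3)] by simp
    show "continuous_on UNIV D4" unfolding D4_def using fc[OF B(4)] by simp
    show "continuous_on UNIV D5" unfolding D5_def using fc[OF B(5)] by simp
  next
    fix u v t s :: real
    let ?P = "(u, v, sin t * cos s, sin t * sin s, cos t)"
    have "((\<lambda>x. (x, v, sin t * cos s, sin t * sin s, cos t)) has_derivative (\<lambda>h. (h, 0, 0, 0, 0))) (at u)"
      by (auto intro!: derivative_eq_intros simp: zero_prod_def)
    from has_derivative_compose[OF this fd]
    have "pu (sph \<Phi>) u v t s = f' ?P (1,0,0,0,0)"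
      unfolding pu_def sph_def by (rule deriv_from_has_derivative)
    then show "pu (sph \<Phi>) u v t s = D1 ?P" by (simp add: D1_def)
    have "((\<lambda>x. (u, x, sin t * cos s, sin t * sin s, cos t)) has_derivative (\<lambda>h. (0, h, 0, 0, 0))) (at v)"
      by (auto intro!: derivative_eq_intros simp: zero_prod_def)
    from has_derivative_compose[OF this fd]
    have "pv (sph \<Phi>) u v t s = f' ?P (0,1,0,0,0)"
      unfolding pv_def sph_def by (rule deriv_from_has_derivative)
    then show "pv (sph \<Phi>) u v t s = D2 ?P" by (simp add: D2_def)
    have "((\<lambda>x. (u, v, sin x * cos s, sin x * sin s, cos x)) has_derivative
          (\<lambda>h. (0, 0, (cos t * cos s) * h, (cos t * sin s) * h, (- sin t) * h))) (at t)"
      apply (intro has_derivative_Pair has_derivative_const)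
      apply (rule has_field_derivative_imp_has_derivative, auto intro!: derivative_eq_intros)+
      done
    from has_derivative_compose[OF this fd]
    have "ptheta (sph \<Phi>) u v t s = f' ?P (0, 0, cos t * cos s, cos t * sin s, - sin t)"
      unfolding ptheta_def sph_def by (rule deriv_from_has_derivative[THEN trans]) simp
    then show "ptheta (sph \<Phi>) u v t s = cos t * cos s * D3 ?P + cos t * sin s * D4 ?P - sin t * D5 ?P"
      using lin5[OF lin[of ?P], of 0 0 "cos t * cos s" "cos t * sin s" "- sin t"]
      by (simp add: D3_def D4_def D5_def)
    have "((\<lambda>x. (u, v, sin t * cos x, sin t * sin x, cos t)) has_derivative
          (\<lambda>h. (0, 0, (- sin t * sin s) * h, (sin t * cos s) * h, 0 * h))) (at s)"
      apply (intro has_derivative_Pair has_derivative_const)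
      apply (rule has_field_derivative_imp_has_derivative, auto intro!: derivative_eq_intros)+
      done
    from has_derivative_compose[OF this fd]
    have "pvartheta (sph \<Phi>) u v t s = f' ?P (0, 0, - sin t * sin s, sin t * cos s, 0)"
      unfolding pvartheta_def sph_def by (rule deriv_from_has_derivative[THEN trans]) simp
    then show "pvartheta (sph \<Phi>) u v t s = sin t * (- sin s * D3 ?P + cos s * D4 ?P)"
      using lin5[OF lin[of ?P], of 0 0 "- sin t * sin s" "sin t * cos s" 0]
      by (simp add: D3_def D4_def algebra_simps)
  qed
qed


abbreviation (input) C4 :: "real set \<Rightarrow> real set \<Rightarrow> (real \<Rightarrow> real \<Rightarrow> real \<Rightarrow> real \<Rightarrow> real) \<Rightarrow> bool" where
  "C4 A B f \<equiv> continuous_on (A \<times> B \<times> TT) (\<lambda>(x,y,t,s). f x y t s)"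

lemma C4_swap:
  assumes "C4 A B f"
  shows "C4 B A (\<lambda>y x t s. f x y t s)"
proof -
  have "continuous_on (B \<times> A \<times> TT) (\<lambda>w. (\<lambda>(x,y,t,s). f x y t s) (fst (snd w), fst w, fst (snd (snd w)), snd (snd (snd w))))"
    by (rule continuous_on_compose2[OF assms]) (auto intro!: continuous_intros)
  then show ?thesis by (simp add: case_prod_beta)
qed

lemma C4_slice1:
  assumes "C4 A B f" "x \<in> A"
  shows "continuous_on (B \<times> TT) (\<lambda>(y,t,s). f x y t s)"
proof -
  have "continuous_on (B \<times> TT) (\<lambda>w. (\<lambda>(x,y,t,s). f x y t s) (x, fst w, fst (snd w), snd (snd w)))"
    by (rule continuous_on_compose2[OF assms(1)]) (use assms(2) in \<open>auto intro!: continuous_intros\<close>)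
  then show ?thesis by (simp add: case_prod_beta)
qed

lemma C3_slice:
  fixes g :: "real \<Rightarrow> real \<Rightarrow> real \<Rightarrow> real"
  assumes "continuous_on (A \<times> TT) (\<lambda>(x,t,s). g x t s)" "t \<in> {0..pi}" "s \<in> {0..2*pi}"
  shows "continuous_on A (\<lambda>x. g x t s)"
proof -
  have "continuous_on A (\<lambda>x. (\<lambda>(x,t,s). g x t s) (x, t, s))"
    by (rule continuous_on_compose2[OF assms(1)]) (use assms(2,3) in \<open>auto simp: TT_def intro!: continuous_intros\<close>)
  then show ?thesis by simp
qed

lemma C3_int:
  fixes g :: "real \<Rightarrow> real \<Rightarrow> real \<Rightarrow> real"
  assumes "continuous_on ({a..b} \<times> TT) (\<lambda>(x,t,s). g x t s)" "t \<in> {0..pi}" "s \<in> {0..2*pi}"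
  shows "(\<lambda>x. g x t s) integrable_on {a..b}"
  using C3_slice[OF assms] integrable_continuous_interval by blast

lemma C4_TT:
  assumes "C4 {a..b} {c..d} f"
  shows "continuous_on TT (\<lambda>(t,s). integral {a..b} (\<lambda>x. integral {c..d} (\<lambda>y. f x y t s)))"
  using P2[OF P1[OF assms]] .

lemma SI_cong_on:
  assumes "\<And>t s. t \<in> {0..pi} \<Longrightarrow> s \<in> {0..2*pi} \<Longrightarrow> g t s = h t s"
  shows "sph_int g = sph_int h"
  unfolding sph_int_def
  by (intro integral_cong) (simp add: assms)

lemma SI_cong_sin:
  assumes "\<And>t s y. g t s y * sin t = h t s y * sin t"
  shows "sph_int (\<lambda>t s. integral I (g t s)) = sph_int (\<lambda>t s. integral I (h t s))"
proof -
  have "integral I (g t s) * sin t = integral I (h t s) * sin t" for t s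
  proof -
    have "integral I (g t s) * sin t = integral I (\<lambda>y. g t s y * sin t)" by simp
    also have "\<dots> = integral I (\<lambda>y. h t s y * sin t)" by (simp only: assms)
    also have "\<dots> = integral I (h t s) * sin t" by simp
    finally show ?thesis .
  qed
  note eq = this
  show ?thesis unfolding sph_int_def by (simp only: eq)
qed

lemma SI_cmul: "sph_int (\<lambda>t s. c * g t s) = c * sph_int g"
  unfolding sph_int_def by (simp add: mult.assoc)

lemma SI_zero: "sph_int (\<lambda>t s. 0) = 0"
  unfolding sph_int_def by simp

lemma TT_mem: "(t,s) \<in> TT \<longleftrightarrow> t \<in> {0..pi} \<and> s \<in> {0..2*pi}"
  by (simp add: TT_def)

lemma Mono2:
  assumes cf: "C4 {a..b} {c..d} f" and cg: "C4 {a..b} {c..d} g"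
    and le: "\<And>x y t s. x \<in> {a..b} \<Longrightarrow> y \<in> {c..d} \<Longrightarrow> t \<in> {0..pi} \<Longrightarrow> s \<in> {0..2*pi} \<Longrightarrow> f x y t s \<le> g x y t s"
  shows "sph_int (\<lambda>t s. integral {a..b} (\<lambda>x. integral {c..d} (\<lambda>y. f x y t s)))
       \<le> sph_int (\<lambda>t s. integral {a..b} (\<lambda>x. integral {c..d} (\<lambda>y. g x y t s)))"
proof (rule SI_mono[OF C4_TT[OF cf] C4_TT[OF cg]])
  fix t s assume ts: "t \<in> {0..pi}" "s \<in> {0..2*pi}"
  show "integral {a..b} (\<lambda>x. integral {c..d} (\<lambda>y. f x y t s)) \<le> integral {a..b} (\<lambda>x. integral {c..d} (\<lambda>y. g x y t s))"
  proof (rule integral_le)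
    show "(\<lambda>x. integral {c..d} (\<lambda>y. f x y t s)) integrable_on {a..b}"
      using C3_int[OF P1[OF cf] ts] by simp
    show "(\<lambda>x. integral {c..d} (\<lambda>y. g x y t s)) integrable_on {a..b}"
      using C3_int[OF P1[OF cg] ts] by simp
    fix x assume x: "x \<in> {a..b}"
    show "integral {c..d} (\<lambda>y. f x y t s) \<le> integral {c..d} (\<lambda>y. g x y t s)"
    proof (rule integral_le)
      show "(\<lambda>y. f x y t s) integrable_on {c..d}" using C3_int[OF C4_slice1[OF cf x] ts] .
      show "(\<lambda>y. g x y t s) integrable_on {c..d}" using C3_int[OF C4_slice1[OF cg x] ts] .
    qed (use le x ts in auto)
  qed
qed

lemma Lin2:
  assumes cf: "C4 {a..b} {c..d} f" and cg: "C4 {a..b} {c..d} g"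
  shows "sph_int (\<lambda>t s. integral {a..b} (\<lambda>x. integral {c..d} (\<lambda>y. k1 * f x y t s + k2 * g x y t s)))
       = k1 * sph_int (\<lambda>t s. integral {a..b} (\<lambda>x. integral {c..d} (\<lambda>y. f x y t s)))
       + k2 * sph_int (\<lambda>t s. integral {a..b} (\<lambda>x. integral {c..d} (\<lambda>y. g x y t s)))"
proof -
  have inner: "integral {a..b} (\<lambda>x. integral {c..d} (\<lambda>y. k1 * f x y t s + k2 * g x y t s))
      = k1 * integral {a..b} (\<lambda>x. integral {c..d} (\<lambda>y. f x y t s))
      + k2 * integral {a..b} (\<lambda>x. integral {c..d} (\<lambda>y. g x y t s))"
    if ts: "t \<in> {0..pi}" "s \<in> {0..2*pi}" for t s
  proof -
    have "integral {a..b} (\<lambda>x. integral {c..d} (\<lambda>y. k1 * f x y t s + k2 * g x y t s))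
        = integral {a..b} (\<lambda>x. k1 * integral {c..d} (\<lambda>y. f x y t s) + k2 * integral {c..d} (\<lambda>y. g x y t s))"
    proof (rule integral_cong)
      fix x assume x: "x \<in> {a..b}"
      have i1: "(\<lambda>y. f x y t s) integrable_on {c..d}" using C3_int[OF C4_slice1[OF cf x] ts] .
      have i2: "(\<lambda>y. g x y t s) integrable_on {c..d}" using C3_int[OF C4_slice1[OF cg x] ts] .
      show "integral {c..d} (\<lambda>y. k1 * f x y t s + k2 * g x y t s) = k1 * integral {c..d} (\<lambda>y. f x y t s) + k2 * integral {c..d} (\<lambda>y. g x y t s)"
        using integral_add[OF integrable_on_cmult_left[OF i1] integrable_on_cmult_left[OF i2]] by simp
    qed
    also have "\<dots> = k1 * integral {a..b} (\<lambda>x. integral {c..d} (\<lambda>y. f x y t s))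
      + k2 * integral {a..b} (\<lambda>x. integral {c..d} (\<lambda>y. g x y t s))"
    proof -
      have i1: "(\<lambda>x. integral {c..d} (\<lambda>y. f x y t s)) integrable_on {a..b}"
        using C3_int[OF P1[OF cf] ts] by simp
      have i2: "(\<lambda>x. integral {c..d} (\<lambda>y. g x y t s)) integrable_on {a..b}"
        using C3_int[OF P1[OF cg] ts] by simp
      show ?thesis
        using integral_add[OF integrable_on_cmult_left[OF i1] integrable_on_cmult_left[OF i2]] by simp
    qed
    finally show ?thesis .
  qed
  have "sph_int (\<lambda>t s. integral {a..b} (\<lambda>x. integral {c..d} (\<lambda>y. k1 * f x y t s + k2 * g x y t s)))
     = sph_int (\<lambda>t s. k1 * integral {a..b} (\<lambda>x. integral {c..d} (\<lambda>y. f x y t s))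
      + k2 * integral {a..b} (\<lambda>x. integral {c..d} (\<lambda>y. g x y t s)))"
    by (rule SI_cong_on) (rule inner)
  also have "\<dots> = k1 * sph_int (\<lambda>t s. integral {a..b} (\<lambda>x. integral {c..d} (\<lambda>y. f x y t s)))
       + k2 * sph_int (\<lambda>t s. integral {a..b} (\<lambda>x. integral {c..d} (\<lambda>y. g x y t s)))"
  proof -
    note c1 = SI_cont1[OF C4_TT[OF cf]] and c2 = SI_cont1[OF C4_TT[OF cg]]
    have ci1: "(\<lambda>t. integral {0..2*pi} (\<lambda>s. integral {a..b} (\<lambda>x. integral {c..d} (\<lambda>y. f x y t s)) * sin t)) integrable_on {0..pi}"
      using c1 integrable_continuous_interval by blast
    have ci2: "(\<lambda>t. integral {0..2*pi} (\<lambda>s. integral {a..b} (\<lambda>x. integral {c..d} (\<lambda>y. g x y t s)) * sin t)) integrable_on {0..pi}"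
      using c2 integrable_continuous_interval by blast
    have inner2: "integral {0..2*pi} (\<lambda>s. (k1 * integral {a..b} (\<lambda>x. integral {c..d} (\<lambda>y. f x y t s))
      + k2 * integral {a..b} (\<lambda>x. integral {c..d} (\<lambda>y. g x y t s))) * sin t)
      = k1 * integral {0..2*pi} (\<lambda>s. integral {a..b} (\<lambda>x. integral {c..d} (\<lambda>y. f x y t s)) * sin t)
      + k2 * integral {0..2*pi} (\<lambda>s. integral {a..b} (\<lambda>x. integral {c..d} (\<lambda>y. g x y t s)) * sin t)"
      if t: "t \<in> {0..pi}" for t
    proof -
      have cs: "continuous_on {0..2*pi} (\<lambda>s. h t s)" if "continuous_on TT (\<lambda>(t,s). h t s)" for h :: "real \<Rightarrow> real \<Rightarrow> real"
      proof -
        have "continuous_on {0..2*pi} (\<lambda>s. (\<lambda>(t,s). h t s) (t, s))"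
          by (rule continuous_on_compose2[OF that]) (use t in \<open>auto simp: TT_def intro!: continuous_intros\<close>)
        then show ?thesis by simp
      qed
      have j1: "(\<lambda>s. integral {a..b} (\<lambda>x. integral {c..d} (\<lambda>y. f x y t s)) * sin t) integrable_on {0..2*pi}"
        by (rule integrable_continuous_interval, rule continuous_on_mult[OF cs[OF C4_TT[OF cf]] continuous_on_const])
      have j2: "(\<lambda>s. integral {a..b} (\<lambda>x. integral {c..d} (\<lambda>y. g x y t s)) * sin t) integrable_on {0..2*pi}"
        by (rule integrable_continuous_interval, rule continuous_on_mult[OF cs[OF C4_TT[OF cg]] continuous_on_const])
      show ?thesis
        using integral_add[OF integrable_on_cmult_left[OF j1, of k1] integrable_on_cmult_left[OF j2, of k2]]
        by (simp add: algebra_simps)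
    qed
    show ?thesis unfolding sph_int_def
      apply (subst integral_cong[OF inner2], assumption)
      using integral_add[OF integrable_on_cmult_left[OF ci1, of k1] integrable_on_cmult_left[OF ci2, of k2]]
      by simp
  qed
  finally show ?thesis .
qed


lemma powr_exp_tendsto:
  fixes \<beta> p :: real
  assumes "\<beta> > 0" "p \<ge> 0"
  shows "((\<lambda>x. x powr p * exp (-2*\<beta>* x)) \<longlongrightarrow> 0) at_top"
proof -
  define k where "k = nat \<lceil>p\<rceil>"
  have pk: "p \<le> real k" unfolding k_def by linarith
  have lim1: "filterlim (\<lambda>x::real. 2*\<beta>* x) at_top at_top"
    by (rule filterlim_tendsto_pos_mult_at_top[OF tendsto_const _ filterlim_ident]) (use assms in simp)
  have "((\<lambda>x. (2*\<beta>* x) ^ k / exp (2*\<beta>* x)) \<longlongrightarrow> 0) at_top"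
    using filterlim_compose[OF tendsto_power_div_exp_0 lim1] by simp
  then have "((\<lambda>x. (1/(2*\<beta>)^k) * ((2*\<beta>* x) ^ k / exp (2*\<beta>* x))) \<longlongrightarrow> (1/(2*\<beta>)^k) * 0) at_top"
    by (intro tendsto_mult tendsto_const)
  moreover have "(1/(2*\<beta>)^k) * ((2*\<beta>* x) ^ k / exp (2*\<beta>* x)) = x ^ k * exp (-2*\<beta>* x)" for x
    using assms by (simp add: power_mult_distrib field_simps exp_minus)
  ultimately have lim2: "((\<lambda>x. x ^ k * exp (-2*\<beta>* x)) \<longlongrightarrow> 0) at_top" by simp
  show ?thesis
  proof (rule tendsto_sandwich[OF _ _ tendsto_const lim2])
    show "eventually (\<lambda>x. 0 \<le> x powr p * exp (-2*\<beta>* x)) at_top" by simp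
    have "x powr p * exp (-2*\<beta>* x) \<le> x ^ k * exp (-2*\<beta>* x)" if "x \<ge> 1" for x :: real
    proof -
      have "x powr p \<le> x powr (real k)" using that pk by (intro powr_mono) auto
      also have "\<dots> = x ^ k" using that by (simp add: powr_realpow)
      finally show ?thesis by (simp add: mult_right_mono)
    qed
    note that = this
    show "eventually (\<lambda>x. x powr p * exp (-2*\<beta>* x) \<le> x ^ k * exp (-2*\<beta>* x)) at_top"
      using eventually_ge_at_top[of "1::real"] by (rule eventually_mono) (rule that)
  qed
qed

lemma bounded_sup:
  fixes F :: "real \<Rightarrow> real"
  assumes "continuous_on {a..b} F" "x \<in> {a..b}"
  shows "F x \<le> (SUP y\<in>{a..b}. F y)"
proof -
  have "compact (F ` {a..b})" by (rule compact_continuous_image[OF assms(1) compact_Icc])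
  then have "bdd_above (F ` {a..b})" by (simp add: bounded_imp_bdd_above compact_imp_bounded)
  then show ?thesis using assms(2) by (rule cSUP_upper2) simp
qed


lemma rpm_facts:
  fixes M e :: real
  assumes "0 < \<bar>e\<bar>" "\<bar>e\<bar> < M"
  shows "0 < rminus M e" "rminus M e < rplus M e"
    "\<And>\<rho>. \<rho> > 0 \<Longrightarrow> Dfun M e \<rho> = (\<rho> - rminus M e) * (\<rho> - rplus M e) / \<rho>^2"
proof -
  have "\<bar>e\<bar>^2 < M^2" by (rule power_strict_mono) (use assms in auto)
  then have e2: "e^2 < M^2" by simp
  have sq: "sqrt (M^2 - e^2) < M"
  proof -
    have "sqrt (M^2 - e^2) < sqrt (M^2)" using assms by (intro real_sqrt_less_mono) simp
    also have "\<dots> = M" using assms by simp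
    finally show ?thesis .
  qed
  have sqp: "sqrt (M^2 - e^2) > 0" using e2 by simp
  show "0 < rminus M e" using sq by (simp add: rminus_def)
  show "rminus M e < rplus M e" using sqp by (simp add: rminus_def rplus_def)
  fix \<rho> :: real assume "\<rho> > 0"
  have ss: "(sqrt (M^2 - e^2))^2 = M^2 - e^2" using e2 by simp
  have "(\<rho> - rminus M e) * (\<rho> - rplus M e) = \<rho>^2 - 2*M*\<rho> + e^2"
    unfolding rminus_def rplus_def using ss by (simp add: algebra_simps power2_eq_square)
  then show "Dfun M e \<rho> = (\<rho> - rminus M e) * (\<rho> - rplus M e) / \<rho>^2"
    using \<open>\<rho> > 0\<close> unfolding Dfun_def by (simp add: field_simps power2_eq_square)
qed

lemma Om2_pos:
  assumes "0 < \<bar>e\<bar>" "\<bar>e\<bar> < M" "rminus M e < \<rho>" "\<rho> < rplus M e"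
  shows "Om2 M e \<rho> > 0"
proof -
  note f = rpm_facts[OF assms(1,2)]
  have "\<rho> > 0" using f(1) assms by linarith
  have "(\<rho> - rminus M e) * (\<rho> - rplus M e) < 0" using assms by (simp add: mult_pos_neg)
  then have "Dfun M e \<rho> < 0" using f(3)[OF \<open>\<rho> > 0\<close>] \<open>\<rho> > 0\<close> by (simp add: divide_neg_pos)
  then show ?thesis by (simp add: Om2_def)
qed

lemma Om2_le:
  assumes "\<rho> > 0" "M > 0"
  shows "Om2 M e \<rho> \<le> 2*M/\<rho>"
proof -
  have "e^2/\<rho>^2 \<ge> 0" by simp
  then show ?thesis unfolding Om2_def Dfun_def by (simp; linarith)
qed



lemma R_decr:
  assumes "0 < \<bar>e\<bar>" "\<bar>e\<bar> < M"
    and Rb: "\<forall>s. rminus M e < R s \<and> R s < rplus M e"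
    and Rd: "\<forall>s. (R has_real_derivative Dfun M e (R s)) (at s)"
    and "a < b"
  shows "R b < R a"
proof -
  have "Dfun M e (R s) < 0" for s
    using Om2_pos[OF assms(1,2), of "R s"] Rb by (simp add: Om2_def)
  then show ?thesis
    by (intro DERIV_neg_imp_decreasing[of a b R] \<open>a < b\<close>) (use Rd in blast)
qed

lemma R_cont: "\<forall>s. (R has_real_derivative d s) (at s) \<Longrightarrow> continuous_on A R"
  by (intro continuous_at_imp_continuous_on ballI) (use DERIV_isCont in blast)

lemma rstar_prop:
  assumes "0 < \<bar>e\<bar>" "\<bar>e\<bar> < M"
    and Rb: "\<forall>s. rminus M e < R s \<and> R s < rplus M e"
    and Rd: "\<forall>s. (R has_real_derivative Dfun M e (R s)) (at s)"
    and Rbot: "(R \<longlongrightarrow> rplus M e) at_bot"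
    and Rtop: "(R \<longlongrightarrow> rminus M e) at_top"
    and rb: "rminus M e < r_blue" "r_blue < rplus M e"
  shows "R (rstar_of R r_blue) = r_blue"
proof -
  have "eventually (\<lambda>s. R s > r_blue) at_bot"
    using order_tendstoD(1)[OF Rbot rb(2)] .
  then obtain a where "\<forall>n\<le>a. R n > r_blue" unfolding eventually_at_bot_linorder by blast
  then have a: "R a > r_blue" by simp
  have "eventually (\<lambda>s. R s < r_blue) at_top"
    using order_tendstoD(2)[OF Rtop rb(1)] .
  then obtain b where "\<forall>n\<ge>b. R n < r_blue" unfolding eventually_at_top_linorder by blast
  then have b: "R b < r_blue" by simp
  have ab: "a < b"
  proof (rule ccontr)
    assume "\<not> a < b"
    then have "b = a \<or> b < a" by auto
    then show False
    proof
      assume "b = a" then show False using a b by simp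
    next
      assume "b < a" then have "R a < R b" by (rule R_decr[OF assms(1-4)])
      with a b show False by simp
    qed
  qed
  have "\<exists>x. a \<le> x \<and> x \<le> b \<and> R x = r_blue"
  proof (rule IVT2)
    show "\<forall>x. a \<le> x \<and> x \<le> b \<longrightarrow> isCont R x" using Rd DERIV_isCont by blast
  qed (use a b ab in auto)
  then obtain x where x: "R x = r_blue" by blast
  have uniq: "y = x" if "R y = r_blue" for y
  proof (rule ccontr)
    assume "y \<noteq> x"
    then have "y < x \<or> x < y" by auto
    then show False
    proof
      assume "y < x" then have "R x < R y" by (rule R_decr[OF assms(1-4)])
      with that x show False by simp
    next
      assume "x < y" then have "R y < R x" by (rule R_decr[OF assms(1-4)])
      with that x show False by simp
    qed
  qed
  have "(THE s. R s = r_blue) = x" by (rule the_equality) (use x uniq in blast)+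
  then show ?thesis unfolding rstar_of_def using x by simp
qed


lemma Om2_decay:
  assumes "0 < \<bar>e\<bar>" "\<bar>e\<bar> < M"
    and Rb: "\<forall>s. rminus M e < R s \<and> R s < rplus M e"
    and Rd: "\<forall>s. (R has_real_derivative Dfun M e (R s)) (at s)"
    and sb: "R sb = r_blue"
    and hb: "\<forall>\<rho>. rminus M e < \<rho> \<and> \<rho> \<le> r_blue \<longrightarrow> - (1/(2*\<rho>^2)) * (M - e^2/\<rho>) \<ge> \<beta>"
    and "sb \<le> s"
  shows "Om2 M e (R s) \<le> Om2 M e r_blue * exp (- 4*\<beta>*(s - sb))"
proof -
  note f = rpm_facts[OF assms(1,2)]
  define g where "g x = Om2 M e (R x) * exp (4*\<beta>* x)" for x
  have der: "\<exists>y. DERIV g x :> y \<and> y \<le> 0" if x: "sb \<le> x" "x \<le> s" for x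
  proof -
    let ?r = "R x"
    have rpos: "?r > 0" using Rb f(1) by (meson order.strict_trans)
    have rle: "?r \<le> r_blue"
    proof (cases "x = sb")
      case True then show ?thesis using sb by simp
    next
      case False then have "sb < x" using x by simp
      then have "R x < R sb" by (rule R_decr[OF assms(1-4)])
      then show ?thesis using sb by simp
    qed
    have hx: "- (1/(2*?r^2)) * (M - e^2/?r) \<ge> \<beta>" using hb Rb rle by blast
    have O: "Om2 M e ?r > 0" using Om2_pos[OF assms(1,2)] Rb by blast
    have dOm: "((\<lambda>\<rho>. - (1 - 2* M/\<rho> + e^2/\<rho>^2)) has_real_derivative (- (2* M/?r^2 - 2* e^2/?r^3))) (at ?r)"
      using rpos
      by (auto intro!: derivative_eq_intros simp: field_simps power2_eq_square power3_eq_cube)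
    then have dOm': "(Om2 M e has_real_derivative (- (2* M/?r^2 - 2* e^2/?r^3))) (at ?r)"
      unfolding Om2_def[abs_def] Dfun_def .
    have dO: "((\<lambda>x. Om2 M e (R x)) has_real_derivative
        (- (2* M/?r^2 - 2* e^2/?r^3)) * Dfun M e ?r) (at x)"
      using DERIV_chain2[OF dOm' Rd[rule_format, of x]] .
    have "DERIV g x :> (- (2* M/?r^2 - 2* e^2/?r^3)) * Dfun M e ?r * exp (4*\<beta>* x) + Om2 M e ?r * (exp (4*\<beta>* x) * (4*\<beta>))"
      unfolding g_def by (auto intro!: derivative_eq_intros dO)
    moreover have "(- (2* M/?r^2 - 2* e^2/?r^3)) * Dfun M e ?r * exp (4*\<beta>* x) + Om2 M e ?r * (exp (4*\<beta>* x) * (4*\<beta>))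
        = (2/?r^2 * (M - e^2/?r) + 4*\<beta>) * Om2 M e ?r * exp (4*\<beta>* x)"
      using rpos unfolding Om2_def by (simp add: field_simps power2_eq_square power3_eq_cube)
    moreover have "2/?r^2 * (M - e^2/?r) + 4*\<beta> \<le> 0"
    proof -
      have "- (1/(2*?r^2)) * (M - e^2/?r) = - (1/4) * (2/?r^2 * (M - e^2/?r))"
        using rpos by (simp add: field_simps power2_eq_square)
      then show ?thesis using hx by linarith
    qed
    moreover have "Om2 M e ?r * exp (4*\<beta>* x) \<ge> 0" using O by simp
    ultimately show ?thesis
      by (metis mult.assoc mult_nonpos_nonneg)
  qed
  have "g s \<le> g sb" using DERIV_nonpos_imp_nonincreasing[OF \<open>sb \<le> s\<close> der] by simp
  then have "Om2 M e (R s) * exp (4 * \<beta> * s) \<le> Om2 M e r_blue * exp (4 * \<beta> * sb)"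
    unfolding g_def sb by simp
  then have "Om2 M e (R s) \<le> Om2 M e r_blue * exp (4 * \<beta> * sb) / exp (4 * \<beta> * s)"
    by (simp add: field_simps)
  also have "\<dots> = Om2 M e r_blue * exp (4 * \<beta> * sb - 4 * \<beta> * s)"
    by (simp only: exp_diff) simp
  also have "\<dots> = Om2 M e r_blue * exp (- 4*\<beta>*(s - sb))"
    by (simp add: algebra_simps)
  finally show ?thesis .
qed


lemma u_gamma_decr:
  assumes "\<alpha> > 0" "\<alpha> < v" "v < w"
  shows "u_gamma \<alpha> sb w < u_gamma \<alpha> sb v"
proof -
  have "\<exists>y. ((\<lambda>x. \<alpha> * ln x + 2* sb - x) has_real_derivative y) (at x) \<and> y < 0" if "v \<le> x" "x \<le> w" for x
  proof -
    have xp: "x > \<alpha>" using that assms by simp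
    then have "x > 0" using assms by simp
    have "((\<lambda>x. \<alpha> * ln x + 2* sb - x) has_real_derivative (\<alpha> / x - 1)) (at x)"
      using \<open>x > 0\<close> by (auto intro!: derivative_eq_intros simp: field_simps)
    moreover have "\<alpha> / x - 1 < 0" using xp \<open>x > 0\<close> by (simp add: field_simps)
    ultimately show ?thesis by blast
  qed
  from DERIV_neg_imp_decreasing[OF \<open>v < w\<close> this] show ?thesis
    unfolding u_gamma_def by simp
qed

lemma v_gamma_eq:
  assumes "\<alpha> > 0" "v0 > 2*\<alpha>"
  shows "v_gamma \<alpha> sb (u_gamma \<alpha> sb v0) = v0"
  unfolding v_gamma_def
proof (rule the_equality)
  show "2 * \<alpha> < v0 \<and> u_gamma \<alpha> sb v0 = u_gamma \<alpha> sb v0" using assms by simp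
  fix v assume v: "2 * \<alpha> < v \<and> u_gamma \<alpha> sb v = u_gamma \<alpha> sb v0"
  show "v = v0"
  proof (rule ccontr)
    assume "v \<noteq> v0"
    then have "v < v0 \<or> v0 < v" by auto
    then show False
    proof
      assume "v < v0"
      then have "u_gamma \<alpha> sb v0 < u_gamma \<alpha> sb v" using assms v by (intro u_gamma_decr) auto
      with v show False by simp
    next
      assume "v0 < v"
      then have "u_gamma \<alpha> sb v < u_gamma \<alpha> sb v0" using assms v by (intro u_gamma_decr) auto
      with v show False by simp
    qed
  qed
qed

lemma tail_bound:
  fixes \<beta> p vs vh :: real
  assumes "\<beta> > 0" "p \<ge> 0" "vs > 0" "p \<le> \<beta> * vs" "vs \<le> vh"
  shows "integral {vs..vh} (\<lambda>v. v powr p * exp (-2*\<beta>* v)) \<le> vs powr p * exp (-2*\<beta>* vs) / \<beta>"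
proof -
  define G where "G x = x powr p * exp (-2*\<beta>* x)" for x
  define G' where "G' x = p * x powr (p - 1) * exp (-2*\<beta>* x) + x powr p * (exp (-2*\<beta>* x) * (-2*\<beta>))" for x
  have dG: "(G has_real_derivative G' x) (at x)" if "x > 0" for x
    unfolding G_def G'_def using that
    by (auto intro!: derivative_eq_intros)
  have ftc: "(G' has_integral G vh - G vs) {vs..vh}"
  proof (rule fundamental_theorem_of_calculus[OF \<open>vs \<le> vh\<close>])
    fix x assume "x \<in> {vs..vh}"
    then have "x > 0" using assms by simp
    show "(G has_vector_derivative G' x) (at x within {vs..vh})"
      using dG[OF \<open>x > 0\<close>] has_real_derivative_iff_has_vector_derivative
      by (metis has_field_derivative_at_within)
  qed
  have le: "x powr p * exp (-2*\<beta>* x) \<le> - G' x / \<beta>" if "x \<in> {vs..vh}" for x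
  proof -
    have x: "x > 0" "p \<le> \<beta> * x" using that assms
      by (auto intro: order.trans[OF assms(4)] mult_left_mono)
    have xp: "x powr p = x * x powr (p - 1)" using x(1) by (simp add: powr_mult_base)
    have "p * x powr (p - 1) \<le> \<beta> * x powr p"
      using x xp by (simp add: mult_right_mono)
    then have "p * x powr (p - 1) * exp (-2*\<beta>* x) \<le> \<beta> * x powr p * exp (-2*\<beta>* x)"
      by (simp add: mult_right_mono)
    then have "G' x \<le> - \<beta> * (x powr p * exp (-2*\<beta>* x))"
      unfolding G'_def by (simp add: algebra_simps)
    then show ?thesis using assms(1) by (simp add: field_simps)
  qed
  have hint: "(\<lambda>v. v powr p * exp (-2*\<beta>* v)) integrable_on {vs..vh}"
    by (rule integrable_continuous_interval) (use assms in \<open>auto intro!: continuous_intros\<close>)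
  have hi2: "((\<lambda>x. - G' x / \<beta>) has_integral (- (G vh - G vs) / \<beta>)) {vs..vh}"
    using has_integral_divide[OF has_integral_neg[OF ftc]] by simp
  have "integral {vs..vh} (\<lambda>v. v powr p * exp (-2*\<beta>* v)) \<le> integral {vs..vh} (\<lambda>x. - G' x / \<beta>)"
    by (rule integral_le[OF hint]) (use hi2 le in auto)
  also have "\<dots> = - (G vh - G vs) / \<beta>"
    using hi2 by (rule integral_unique)
  also have "\<dots> \<le> G vs / \<beta>"
    using assms by (simp add: G_def divide_right_mono)
  finally show ?thesis unfolding G_def .
qed


lemma ptwise:
  fixes r rm Om Ob Kd V E x y :: real
  assumes "rm > 0" "rm \<le> r" "0 \<le> Om" "Om \<le> Ob" "Om \<le> Kd * E" "1 \<le> V"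
  shows "\<bar>- (2 / r) * (V + 1) * x * y\<bar> * r^2 * Om / 2
     \<le> Ob / rm * (V * x^2 * r^2) + Kd / rm * ((V * E) * (y^2 * r^2))"
proof -
  have r: "r > 0" using assms by linarith
  have eq: "\<bar>- (2 / r) * (V + 1) * x * y\<bar> * r^2 * Om / 2 = r * Om * ((V + 1) * (\<bar>x\<bar> * \<bar>y\<bar>))"
  proof -
    have a: "\<bar>- (2 / r) * (V + 1) * x * y\<bar> = (2 / r) * (V + 1) * (\<bar>x\<bar> * \<bar>y\<bar>)"
      using r assms by (simp add: abs_mult)
    show ?thesis unfolding a using r by (simp add: power2_eq_square)
  qed
  have xy: "\<bar>x\<bar> * \<bar>y\<bar> \<le> (x^2 + y^2) / 2"
  proof -
    have "0 \<le> (\<bar>x\<bar> - \<bar>y\<bar>)^2" by simp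
    also have "\<dots> = x^2 + y^2 - 2 * \<bar>x\<bar> * \<bar>y\<bar>" by (simp add: power2_diff)
    finally have "0 \<le> x^2 + y^2 - 2 * (\<bar>x\<bar> * \<bar>y\<bar>)" by (simp add: mult.assoc)
    then show ?thesis by (simp add: field_simps)
  qed
  have "(V + 1) * (\<bar>x\<bar> * \<bar>y\<bar>) \<le> (2 * V) * ((x^2 + y^2) / 2)"
    by (rule mult_mono) (use assms xy in auto)
  then have A: "(V + 1) * (\<bar>x\<bar> * \<bar>y\<bar>) \<le> V * x^2 + V * y^2" by (simp add: algebra_simps)
  have rO: "r * Om \<ge> 0" using r assms by simp
  have "r * Om * ((V + 1) * (\<bar>x\<bar> * \<bar>y\<bar>)) \<le> r * Om * (V * x^2 + V * y^2)"
    by (rule mult_left_mono[OF A rO])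
  also have "\<dots> = (r * Om) * (V * x^2) + (r * Om) * (V * y^2)" by (simp add: algebra_simps)
  also have "\<dots> \<le> (Ob / rm * r^2) * (V * x^2) + (Kd * E / rm * r^2) * (V * y^2)"
  proof (rule add_mono; rule mult_right_mono)
    have "r * Om \<le> r * Ob" using r assms by simp
    also have "\<dots> \<le> Ob / rm * r^2"
    proof -
      have "Ob \<ge> 0" using assms by linarith
      have "r * rm \<le> r * r" using r assms by simp
      then have "Ob * (r * rm) \<le> Ob * (r * r)" using \<open>Ob \<ge> 0\<close>
        by (rule mult_left_mono)
      then have "r * Ob * rm \<le> Ob * r^2"
        by (simp add: power2_eq_square algebra_simps)
      then show ?thesis using assms(1) by (simp add: field_simps)
    qed
    finally show "r * Om \<le> Ob / rm * r^2" .
    show "0 \<le> V * x^2" using assms by simp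
    have "r * Om \<le> r * (Kd * E)" using r assms by simp
    also have "\<dots> \<le> Kd * E / rm * r^2"
    proof -
      have "Kd * E \<ge> 0" using assms by linarith
      have "r * rm \<le> r * r" using r assms by simp
      then have "(Kd * E) * (r * rm) \<le> (Kd * E) * (r * r)" using \<open>Kd * E \<ge> 0\<close>
        by (rule mult_left_mono)
      then have "r * (Kd * E) * rm \<le> (Kd * E) * r^2"
        by (simp add: power2_eq_square algebra_simps)
      then show ?thesis using assms(1) by (simp add: field_simps)
    qed
    finally show "r * Om \<le> Kd * E / rm * r^2" .
    show "0 \<le> V * y^2" using assms by simp
  qed
  also have "\<dots> = Ob / rm * (V * x^2 * r^2) + Kd / rm * ((V * E) * (y^2 * r^2))"
    by (simp add: algebra_simps)
  finally show ?thesis using eq by simp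
qed


lemma C4I:
  assumes "continuous_on (A \<times> B \<times> TT) (\<lambda>x. f (fst x) (fst (snd x)) (fst (snd (snd x))) (snd (snd (snd x))))"
  shows "C4 A B f"
  using assms by (simp add: case_prod_beta)

lemma C4_slice_ts:
  assumes "C4 A B f" "t \<in> {0..pi}" "s \<in> {0..2*pi}"
  shows "continuous_on (A \<times> B) (\<lambda>(x,y). f x y t s)"
proof -
  have "continuous_on (A \<times> B) (\<lambda>w. (\<lambda>(x,y,t,s). f x y t s) (fst w, snd w, t, s))"
    by (rule continuous_on_compose2[OF assms(1)]) (use assms(2,3) in \<open>auto simp: TT_def intro!: continuous_intros\<close>)
  then show ?thesis by (simp add: case_prod_beta)
qed

theorem mainTheorem11:
  fixes M e p r_blue \<beta> \<alpha> u_wedge :: real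
    and R :: "real \<Rightarrow> real"
  assumes "0 < \<bar>e\<bar>" and "\<bar>e\<bar> < M"
    and "\<forall>s. rminus M e < R s \<and> R s < rplus M e"
    and "\<forall>s. (R has_real_derivative Dfun M e (R s)) (at s)"
    and "(R \<longlongrightarrow> rplus M e) at_bot"
    and "(R \<longlongrightarrow> rminus M e) at_top"
    and "p > 1"
    and "rminus M e < r_blue" and "r_blue < rplus M e"
    and "\<forall>\<rho>. rminus M e < \<rho> \<and> \<rho> \<le> r_blue \<longrightarrow> M - e^2/\<rho> < 0"
    and "rstar_of R r_blue > 0"
    and "\<beta> > 0"
    and "\<forall>\<rho>. rminus M e < \<rho> \<and> \<rho> \<le> r_blue \<longrightarrow> - (1/(2*\<rho>^2)) * (M - e^2/\<rho>) \<ge> \<beta>"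
    and "\<alpha> > max 1 ((p+1)/\<beta>)"
    and "\<alpha> * (2 - ln (2*\<alpha>)) > 2 * rstar_of R r_blue + 1"
    and "u_wedge \<in> u_gamma \<alpha> (rstar_of R r_blue) ` {2*\<alpha><..}"
  shows "\<exists>\<delta>1 \<delta>2 :: real \<Rightarrow> real.
     (\<forall>\<epsilon>>0. \<delta>1 \<epsilon> > 0) \<and>
     (\<forall>vs\<ge>v_gamma \<alpha> (rstar_of R r_blue) u_wedge. \<delta>2 vs > 0) \<and>
     (\<delta>1 \<longlongrightarrow> 0) (at_right 0) \<and> (\<delta>2 \<longlongrightarrow> 0) at_top \<and>
     (\<forall>\<epsilon> \<Phi> vs vh u1 u2.
        \<epsilon> > 0 \<and> smooth_fun (\<Phi> :: real \<times> real \<times> real \<times> real \<times> real \<Rightarrow> real) \<and>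
        vs \<ge> v_gamma \<alpha> (rstar_of R r_blue) u_wedge \<and> vh > vs \<and>
        u_wedge \<le> u1 \<and> u1 < u2 \<and> u2 - u1 \<le> \<epsilon> \<longrightarrow>
        vol_int M e R (\<lambda>u v \<theta> \<phi>. \<bar>KtildeW R p (sph \<Phi>) u v \<theta> \<phi>\<bar>) u1 u2 vs vh
          \<le> \<delta>1 \<epsilon> * (SUP ub\<in>{u1..u2}. flux_u M e R W_u (W_v p) (sph \<Phi>) ub vs vh)
           + \<delta>2 vs * (SUP vb\<in>{vs..vh}. flux_v M e R W_u (W_v p) (sph \<Phi>) vb u1 u2))"

proof -
  note rf = rpm_facts[OF assms(1,2)]
  define rm where "rm = rminus M e"
  have rm0: "rm > 0" using rf(1) rm_def by simp
  have Rb: "\<forall>s. rminus M e < R s \<and> R s < rplus M e" using assms(3) .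
  have Rpos: "R s > 0" for s using Rb rf(1) by (meson order.strict_trans)
  define sb where "sb = rstar_of R r_blue"
  have Rsb: "R sb = r_blue" unfolding sb_def by (rule rstar_prop[OF assms(1-6) assms(8,9)])
  define Ob where "Ob = Om2 M e r_blue"
  have Ob0: "Ob > 0" unfolding Ob_def by (rule Om2_pos[OF assms(1,2) assms(8,9)])
  obtain v0 where v0: "v0 > 2 * \<alpha>" "u_wedge = u_gamma \<alpha> sb v0" using assms(16) sb_def by auto
  have a1: "\<alpha> > 1" using assms(14) by simp
  have b0: "\<beta> > 0" using assms(12) .
  have vg: "v_gamma \<alpha> sb u_wedge = v0" using v_gamma_eq[of \<alpha> v0 sb] v0 a1 by simp
  have "(p+1)/\<beta> < \<alpha>" using assms(14) by simp
  then have pab: "p + 1 < \<alpha> * \<beta>" using b0 by (simp add: field_simps)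
  define Kd where "Kd = Ob * exp (4 * \<beta> * sb - 2 * \<beta> * u_wedge)"
  have Kd0: "Kd > 0" unfolding Kd_def using Ob0 by simp
  define c1 where "c1 = Ob / rm"
  define c2 where "c2 = Kd / rm"
  have c10: "c1 > 0" and c20: "c2 > 0" unfolding c1_def c2_def using Ob0 Kd0 rm0 by auto
  define \<delta>1 where "\<delta>1 = (\<lambda>\<epsilon>::real. c1 * \<epsilon>)"
  define \<delta>2 where "\<delta>2 = (\<lambda>vs::real. c2 * (vs powr p * exp (-2 * \<beta> * vs) / \<beta>))"
  have v0pos: "v0 > 2" using v0 a1 by linarith
  show ?thesis
  proof (rule exI[of _ \<delta>1], rule exI[of _ \<delta>2], intro conjI)
    show "\<forall>\<epsilon>>0. \<delta>1 \<epsilon> > 0" unfolding \<delta>1_def using c10 by simp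
    show "\<forall>vs\<ge>v_gamma \<alpha> (rstar_of R r_blue) u_wedge. \<delta>2 vs > 0"
      unfolding \<delta>2_def using vg c20 b0 v0pos by (auto simp flip: sb_def)
    have "((\<lambda>\<epsilon>. c1 * \<epsilon>) \<longlongrightarrow> c1 * 0) (at_right 0)"
      by (intro tendsto_intros)
    then show "(\<delta>1 \<longlongrightarrow> 0) (at_right 0)" unfolding \<delta>1_def by simp
    have "((\<lambda>vs. c2 * (vs powr p * exp (-2 * \<beta> * vs) / \<beta>)) \<longlongrightarrow> c2 * (0 / \<beta>)) at_top"
      by (intro tendsto_intros powr_exp_tendsto) (use b0 assms(7) in auto)
    then show "(\<delta>2 \<longlongrightarrow> 0) at_top" unfolding \<delta>2_def by simp
    have main: "vol_int M e R (\<lambda>u v \<theta> \<phi>. \<bar>KtildeW R p (sph \<Phi>) u v \<theta> \<phi>\<bar>) u1 u2 vs vh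
          \<le> \<delta>1 \<epsilon> * (SUP ub\<in>{u1..u2}. flux_u M e R W_u (W_v p) (sph \<Phi>) ub vs vh)
           + \<delta>2 vs * (SUP vb\<in>{vs..vh}. flux_v M e R W_u (W_v p) (sph \<Phi>) vb u1 u2)"
      if H: "\<epsilon> > 0" "smooth_fun \<Phi>" "vs \<ge> v_gamma \<alpha> (rstar_of R r_blue) u_wedge" "vh > vs"
        "u_wedge \<le> u1" "u1 < u2" "u2 - u1 \<le> \<epsilon>"
      for \<epsilon> vs vh u1 u2 :: real and \<Phi> :: "real \<times> real \<times> real \<times> real \<times> real \<Rightarrow> real"
    proof -
      obtain D1 D2 D3 D4 D5 :: "real \<times> real \<times> real \<times> real \<times> real \<Rightarrow> real" where
        cD1: "continuous_on UNIV D1" and cD2: "continuous_on UNIV D2" and cD3: "continuous_on UNIV D3"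
        and cD4: "continuous_on UNIV D4" and cD5: "continuous_on UNIV D5"
        and dU: "\<And>u v t s. pu (sph \<Phi>) u v t s = D1 (u, v, sin t * cos s, sin t * sin s, cos t)"
        and dV: "\<And>u v t s. pv (sph \<Phi>) u v t s = D2 (u, v, sin t * cos s, sin t * sin s, cos t)"
        and dT: "\<And>u v t s. ptheta (sph \<Phi>) u v t s = cos t * cos s * D3 (u, v, sin t * cos s, sin t * sin s, cos t)
          + cos t * sin s * D4 (u, v, sin t * cos s, sin t * sin s, cos t) - sin t * D5 (u, v, sin t * cos s, sin t * sin s, cos t)"
        and dF: "\<And>u v t s. pvartheta (sph \<Phi>) u v t s = sin t * (- sin s * D3 (u, v, sin t * cos s, sin t * sin s, cos t)
          + cos s * D4 (u, v, sin t * cos s, sin t * sin s, cos t))"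
        using sph_derivs[OF H(2)] by blast
      define PU where "PU u v t s = D1 (u, v, sin t * cos s, sin t * sin s, cos t)" for u v t s :: real
      define PV where "PV u v t s = D2 (u, v, sin t * cos s, sin t * sin s, cos t)" for u v t s :: real
      define PT where "PT u v t s = cos t * cos s * D3 (u, v, sin t * cos s, sin t * sin s, cos t)
          + cos t * sin s * D4 (u, v, sin t * cos s, sin t * sin s, cos t) - sin t * D5 (u, v, sin t * cos s, sin t * sin s, cos t)" for u v t s :: real
      define GG where "GG u v t s = - sin s * D3 (u, v, sin t * cos s, sin t * sin s, cos t)
          + cos s * D4 (u, v, sin t * cos s, sin t * sin s, cos t)" for u v t s :: real
      have dU': "pu (sph \<Phi>) u v t s = PU u v t s" for u v t s by (simp add: dU PU_def)
      have dV': "pv (sph \<Phi>) u v t s = PV u v t s" for u v t s by (simp add: dV PV_def)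
      have dT': "ptheta (sph \<Phi>) u v t s = PT u v t s" for u v t s by (simp add: dT PT_def)
      have dF': "pvartheta (sph \<Phi>) u v t s = sin t * GG u v t s" for u v t s by (simp add: dF GG_def)
      have Rne: "R s \<noteq> 0" for s using Rpos[of s] by simp
      have cD1i[continuous_intros]: "continuous_on S g \<Longrightarrow> continuous_on S (\<lambda>x. D1 (g x))"
        for S :: "(real \<times> real \<times> real \<times> real) set" and g by (rule continuous_on_compose2[OF cD1]) auto
      have cD2i[continuous_intros]: "continuous_on S g \<Longrightarrow> continuous_on S (\<lambda>x. D2 (g x))"
        for S :: "(real \<times> real \<times> real \<times> real) set" and g by (rule continuous_on_compose2[OF cD2]) auto
      have cD3i[continuous_intros]: "continuous_on S g \<Longrightarrow> continuous_on S (\<lambda>x. D3 (g x))"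
        for S :: "(real \<times> real \<times> real \<times> real) set" and g by (rule continuous_on_compose2[OF cD3]) auto
      have cD4i[continuous_intros]: "continuous_on S g \<Longrightarrow> continuous_on S (\<lambda>x. D4 (g x))"
        for S :: "(real \<times> real \<times> real \<times> real) set" and g by (rule continuous_on_compose2[OF cD4]) auto
      have cD5i[continuous_intros]: "continuous_on S g \<Longrightarrow> continuous_on S (\<lambda>x. D5 (g x))"
        for S :: "(real \<times> real \<times> real \<times> real) set" and g by (rule continuous_on_compose2[OF cD5]) auto
      have cRi[continuous_intros]: "continuous_on S g \<Longrightarrow> continuous_on S (\<lambda>x. R (g x))"
        for S :: "(real \<times> real \<times> real \<times> real) set" and g by (rule continuous_on_compose2[OF R_cont[OF assms(4)]]) auto
      have vs0: "vs > 2" using H(3) vg v0pos by (simp add: sb_def)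
      define a1 where "a1 u v t s = v powr p * (PV u v t s)^2 * (rr R u v)^2" for u v t s :: real
      define a2 where "a2 u v t s = (v powr p * exp (-2 * \<beta> * v)) * ((PU u v t s)^2 * (rr R u v)^2)" for u v t s :: real
      define b2 where "b2 u v t s = (PU u v t s)^2 * (rr R u v)^2" for u v t s :: real
      define kv where "kv u v t s = \<bar>- (2 / rr R u v) * (v powr p + 1) * PV u v t s * PU u v t s\<bar> * (rr R u v)^2 * Om2 M e (rr R u v) / 2" for u v t s :: real
      define Fu where "Fu u v t s = (v powr p * (PV u v t s)^2 + Om2 M e (rr R u v) / 4 * 1 * (1 / (rr R u v)^2 * ((PT u v t s)^2 + (GG u v t s)^2))) * (rr R u v)^2" for u v t s :: real
      define Fv where "Fv u v t s = (1 * (PU u v t s)^2 + Om2 M e (rr R u v) / 4 * v powr p * (1 / (rr R u v)^2 * ((PT u v t s)^2 + (GG u v t s)^2))) * (rr R u v)^2" for u v t s :: real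
      have Ca1: "C4 {u1..u2} {vs..vh} a1"
        apply (rule C4I) unfolding a1_def PV_def rr_def
        apply (intro continuous_intros) using vs0 by (auto simp: mem_Times_iff)
      have Ca2: "C4 {u1..u2} {vs..vh} a2"
        apply (rule C4I) unfolding a2_def PU_def rr_def
        apply (intro continuous_intros) using vs0 by (auto simp: mem_Times_iff)
      have Cb2: "C4 {u1..u2} {vs..vh} b2"
        apply (rule C4I) unfolding b2_def PU_def rr_def
        apply (intro continuous_intros) using vs0 by (auto simp: mem_Times_iff)
      have Ckv: "C4 {u1..u2} {vs..vh} kv"
        apply (rule C4I) unfolding kv_def PU_def PV_def rr_def Om2_def Dfun_def
        apply (intro continuous_intros) using vs0 Rne by (auto simp: mem_Times_iff)
      have CFu: "C4 {u1..u2} {vs..vh} Fu"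
        apply (rule C4I) unfolding Fu_def PU_def PV_def PT_def GG_def rr_def Om2_def Dfun_def
        apply (intro continuous_intros) using vs0 Rne by (auto simp: mem_Times_iff)
      have CFv: "C4 {u1..u2} {vs..vh} Fv"
        apply (rule C4I) unfolding Fv_def PU_def PV_def PT_def GG_def rr_def Om2_def Dfun_def
        apply (intro continuous_intros) using vs0 Rne by (auto simp: mem_Times_iff)
      have uw: "u_wedge + v0 = \<alpha> * ln v0 + 2 * sb" using v0(2) unfolding u_gamma_def by simp
      have lnv0: "ln v0 > 0" using v0pos by simp
      have vsv0: "vs \<ge> v0" using H(3) vg by (simp add: sb_def)
      have reg: "rm < rr R u v \<and> Om2 M e (rr R u v) > 0 \<and> Om2 M e (rr R u v) \<le> Ob
          \<and> Om2 M e (rr R u v) \<le> Kd * exp (-2 * \<beta> * v)"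
        if "u \<ge> u1" "v \<ge> vs" for u v
      proof (intro conjI)
        have "\<alpha> * ln v0 > 0" using a1 lnv0 by simp
        then have "2 * sb \<le> u + v" using uw that H(5) vsv0 by linarith
        then have s: "sb \<le> (u+v)/2" by simp
        have dec: "Om2 M e (R ((u+v)/2)) \<le> Ob * exp (- 4 * \<beta> * ((u+v)/2 - sb))"
          using Om2_decay[OF assms(1-4) Rsb assms(13) s] unfolding Ob_def .
        show "rm < rr R u v" unfolding rr_def rm_def using Rb by blast
        show "Om2 M e (rr R u v) > 0" unfolding rr_def using Om2_pos[OF assms(1,2)] Rb by blast
        have e1: "exp (- 4 * \<beta> * ((u+v)/2 - sb)) \<le> 1" using s b0 by (simp add: mult_nonneg_nonneg)
        have "Ob * exp (- 4 * \<beta> * ((u+v)/2 - sb)) \<le> Ob * 1"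
          using e1 Ob0 by (intro mult_left_mono) auto
        then show "Om2 M e (rr R u v) \<le> Ob" using dec unfolding rr_def by simp
        have "- 4 * \<beta> * ((u+v)/2 - sb) \<le> (4 * \<beta> * sb - 2 * \<beta> * u_wedge) + (-2 * \<beta> * v)"
        proof -
          have k: "\<beta> * u_wedge \<le> \<beta> * u" using that H(5) b0 by (intro mult_left_mono) auto
          have "(4 * \<beta> * sb - 2 * \<beta> * u_wedge) + (-2 * \<beta> * v) - (- 4 * \<beta> * ((u+v)/2 - sb))
              = 2 * (\<beta> * u - \<beta> * u_wedge)" by (simp add: field_simps)
          moreover have gen: "\<And>A B c::real. B - A = c \<Longrightarrow> 0 \<le> c \<Longrightarrow> A \<le> B" by linarith
          ultimately show ?thesis using k by (metis diff_ge_0_iff_ge mult_nonneg_nonneg zero_le_numeral)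
        qed
        then have "exp (- 4 * \<beta> * ((u+v)/2 - sb)) \<le> exp (4 * \<beta> * sb - 2 * \<beta> * u_wedge) * exp (-2 * \<beta> * v)"
          by (simp add: exp_add[symmetric])
        then have "Ob * exp (- 4 * \<beta> * ((u+v)/2 - sb)) \<le> Ob * (exp (4 * \<beta> * sb - 2 * \<beta> * u_wedge) * exp (-2 * \<beta> * v))"
          using Ob0 by (intro mult_left_mono) auto
        then show "Om2 M e (rr R u v) \<le> Kd * exp (-2 * \<beta> * v)" using dec unfolding rr_def Kd_def
          by (simp add: mult.assoc)
      qed
      have ptw: "kv u v t s \<le> c1 * a1 u v t s + c2 * a2 u v t s"
        if "u \<in> {u1..u2}" "v \<in> {vs..vh}" "t \<in> {0..pi}" "s \<in> {0..2*pi}" for u v t s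
      proof -
        from that have uv: "u \<ge> u1" "v \<ge> vs" by auto
        note rg = reg[OF uv]
        have V1: "1 \<le> v powr p" using vs0 uv assms(7) by (intro ge_one_powr_ge_zero) auto
        have "kv u v t s \<le> Ob / rm * (v powr p * (PV u v t s)^2 * (rr R u v)^2)
            + Kd / rm * ((v powr p * exp (-2 * \<beta> * v)) * ((PU u v t s)^2 * (rr R u v)^2))"
          unfolding kv_def by (rule ptwise) (use rm0 rg V1 in auto)
        then show ?thesis unfolding c1_def c2_def a1_def a2_def .
      qed
      have vol_eq: "vol_int M e R (\<lambda>u v \<theta> \<phi>. \<bar>KtildeW R p (sph \<Phi>) u v \<theta> \<phi>\<bar>) u1 u2 vs vh
          = sph_int (\<lambda>t s. integral {u1..u2} (\<lambda>u. integral {vs..vh} (\<lambda>v. kv u v t s)))"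
        unfolding vol_int_def kv_def KtildeW_def dU' dV' by simp
      have angeq: "angsq R (sph \<Phi>) u v t s * sin t = 1 / (rr R u v)^2 * ((PT u v t s)^2 + (GG u v t s)^2) * sin t" for u v t s
      proof (cases "sin t = 0")
        case True then show ?thesis by simp
      next
        case False
        have "(sin t * GG u v t s)^2 / (sin t)^2 = (GG u v t s)^2" using False by (simp add: power_mult_distrib)
        then show ?thesis unfolding angsq_def dT' dF' by simp
      qed
      have fluxu_eq: "flux_u M e R W_u (W_v p) (sph \<Phi>) ub vs vh = sph_int (\<lambda>t s. integral {vs..vh} (\<lambda>v. Fu ub v t s))" for ub
        unfolding flux_u_def
      proof (rule SI_cong_sin)
        fix t s v
        have "(W_v p ub v * (pv (sph \<Phi>) ub v t s)^2 + Om2 M e (rr R ub v) / 4 * W_u ub v * angsq R (sph \<Phi>) ub v t s) * (rr R ub v)^2 * sin t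
          = (v powr p * (PV ub v t s)^2) * (rr R ub v)^2 * sin t + Om2 M e (rr R ub v) / 4 * (rr R ub v)^2 * (angsq R (sph \<Phi>) ub v t s * sin t)"
          unfolding W_u_def W_v_def dV' by (simp add: algebra_simps)
        also have "\<dots> = Fu ub v t s * sin t" unfolding angeq Fu_def by (simp add: algebra_simps)
        finally show "(W_v p ub v * (pv (sph \<Phi>) ub v t s)^2 + Om2 M e (rr R ub v) / 4 * W_u ub v * angsq R (sph \<Phi>) ub v t s) * (rr R ub v)^2 * sin t
          = Fu ub v t s * sin t" .
      qed
      have fluxv_eq: "flux_v M e R W_u (W_v p) (sph \<Phi>) vb u1 u2 = sph_int (\<lambda>t s. integral {u1..u2} (\<lambda>u. Fv u vb t s))" for vb
        unfolding flux_v_def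
      proof (rule SI_cong_sin)
        fix t s u
        have "(W_u u vb * (pu (sph \<Phi>) u vb t s)^2 + Om2 M e (rr R u vb) / 4 * W_v p u vb * angsq R (sph \<Phi>) u vb t s) * (rr R u vb)^2 * sin t
          = (PU u vb t s)^2 * (rr R u vb)^2 * sin t + Om2 M e (rr R u vb) / 4 * vb powr p * (rr R u vb)^2 * (angsq R (sph \<Phi>) u vb t s * sin t)"
          unfolding W_u_def W_v_def dU' by (simp add: algebra_simps)
        also have "\<dots> = Fv u vb t s * sin t" unfolding angeq Fv_def by (simp add: algebra_simps)
        finally show "(W_u u vb * (pu (sph \<Phi>) u vb t s)^2 + Om2 M e (rr R u vb) / 4 * W_v p u vb * angsq R (sph \<Phi>) u vb t s) * (rr R u vb)^2 * sin t
          = Fv u vb t s * sin t" .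
      qed
      define Su where "Su = (SUP ub\<in>{u1..u2}. flux_u M e R W_u (W_v p) (sph \<Phi>) ub vs vh)"
      define Sv where "Sv = (SUP vb\<in>{vs..vh}. flux_v M e R W_u (W_v p) (sph \<Phi>) vb u1 u2)"
      have cfu: "continuous_on {u1..u2} (\<lambda>ub. flux_u M e R W_u (W_v p) (sph \<Phi>) ub vs vh)"
        unfolding fluxu_eq by (rule SI_param[OF P1[OF CFu]])
      have cfv: "continuous_on {vs..vh} (\<lambda>vb. flux_v M e R W_u (W_v p) (sph \<Phi>) vb u1 u2)"
        unfolding fluxv_eq using SI_param[OF P1[OF C4_swap[OF CFv]]] by simp
      have Su_ge: "flux_u M e R W_u (W_v p) (sph \<Phi>) ub vs vh \<le> Su" if "ub \<in> {u1..u2}" for ub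
        unfolding Su_def by (rule bounded_sup[OF cfu that])
      have Sv_ge: "flux_v M e R W_u (W_v p) (sph \<Phi>) vb u1 u2 \<le> Sv" if "vb \<in> {vs..vh}" for vb
        unfolding Sv_def by (rule bounded_sup[OF cfv that])
      have low_u: "sph_int (\<lambda>t s. integral {vs..vh} (\<lambda>v. a1 ub v t s)) \<le> flux_u M e R W_u (W_v p) (sph \<Phi>) ub vs vh"
        if ub: "ub \<in> {u1..u2}" for ub
        unfolding fluxu_eq
      proof (rule SI_mono[OF P2[OF C4_slice1[OF Ca1 ub]] P2[OF C4_slice1[OF CFu ub]]])
        fix t s assume ts: "t \<in> {0..pi}" "s \<in> {0..2*pi}"
        show "integral {vs..vh} (\<lambda>v. a1 ub v t s) \<le> integral {vs..vh} (\<lambda>v. Fu ub v t s)"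
        proof (rule integral_le)
          show "(\<lambda>v. a1 ub v t s) integrable_on {vs..vh}" using C3_int[OF C4_slice1[OF Ca1 ub] ts] .
          show "(\<lambda>v. Fu ub v t s) integrable_on {vs..vh}" using C3_int[OF C4_slice1[OF CFu ub] ts] .
          fix v assume v: "v \<in> {vs..vh}"
          have O: "Om2 M e (rr R ub v) > 0" using reg[of ub v] ub v by auto
          have "Fu ub v t s = a1 ub v t s + Om2 M e (rr R ub v) / 4 * (1 / (rr R ub v)^2 * ((PT ub v t s)^2 + (GG ub v t s)^2)) * (rr R ub v)^2"
            unfolding Fu_def a1_def by (simp add: algebra_simps)
          moreover have "Om2 M e (rr R ub v) / 4 * (1 / (rr R ub v)^2 * ((PT ub v t s)^2 + (GG ub v t s)^2)) * (rr R ub v)^2 \<ge> 0"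
            using O by simp
          ultimately show "a1 ub v t s \<le> Fu ub v t s" by linarith
        qed
      qed
      have low_v: "sph_int (\<lambda>t s. integral {u1..u2} (\<lambda>u. b2 u vb t s)) \<le> flux_v M e R W_u (W_v p) (sph \<Phi>) vb u1 u2"
        if vb: "vb \<in> {vs..vh}" for vb
        unfolding fluxv_eq
      proof (rule SI_mono[OF P2[OF C4_slice1[OF C4_swap[OF Cb2] vb]] P2[OF C4_slice1[OF C4_swap[OF CFv] vb]]])
        fix t s assume ts: "t \<in> {0..pi}" "s \<in> {0..2*pi}"
        show "integral {u1..u2} (\<lambda>u. b2 u vb t s) \<le> integral {u1..u2} (\<lambda>u. Fv u vb t s)"
        proof (rule integral_le)
          show "(\<lambda>u. b2 u vb t s) integrable_on {u1..u2}" using C3_int[OF C4_slice1[OF C4_swap[OF Cb2] vb] ts] by simp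
          show "(\<lambda>u. Fv u vb t s) integrable_on {u1..u2}" using C3_int[OF C4_slice1[OF C4_swap[OF CFv] vb] ts] by simp
          fix u assume u: "u \<in> {u1..u2}"
          have O: "Om2 M e (rr R u vb) > 0" using reg[of u vb] u vb by auto
          have "Fv u vb t s = b2 u vb t s + Om2 M e (rr R u vb) / 4 * vb powr p * (1 / (rr R u vb)^2 * ((PT u vb t s)^2 + (GG u vb t s)^2)) * (rr R u vb)^2"
            unfolding Fv_def b2_def by (simp add: algebra_simps)
          moreover have "Om2 M e (rr R u vb) / 4 * vb powr p * (1 / (rr R u vb)^2 * ((PT u vb t s)^2 + (GG u vb t s)^2)) * (rr R u vb)^2 \<ge> 0"
            using O by simp
          ultimately show "b2 u vb t s \<le> Fv u vb t s" by linarith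
        qed
      qed
      have zero_u: "0 \<le> sph_int (\<lambda>t s. integral {vs..vh} (\<lambda>v. a1 u1 v t s))"
      proof -
        have u1: "u1 \<in> {u1..u2}" using H(6) by simp
        have "sph_int (\<lambda>t s. 0) \<le> sph_int (\<lambda>t s. integral {vs..vh} (\<lambda>v. a1 u1 v t s))"
        proof (rule SI_mono[OF _ P2[OF C4_slice1[OF Ca1 u1]]])
          show "continuous_on TT (\<lambda>(t, s). 0::real)" by simp
          fix t s assume ts: "t \<in> {0..pi}" "s \<in> {0..2*pi}"
          show "0 \<le> integral {vs..vh} (\<lambda>v. a1 u1 v t s)"
            by (rule integral_nonneg[OF C3_int[OF C4_slice1[OF Ca1 u1] ts]]) (simp add: a1_def)
        qed
        then show ?thesis by (simp add: SI_zero)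
      qed
      have zero_v: "0 \<le> sph_int (\<lambda>t s. integral {u1..u2} (\<lambda>u. b2 u vs t s))"
      proof -
        have vs: "vs \<in> {vs..vh}" using H(4) by simp
        have "sph_int (\<lambda>t s. 0) \<le> sph_int (\<lambda>t s. integral {u1..u2} (\<lambda>u. b2 u vs t s))"
        proof (rule SI_mono[OF _ P2[OF C4_slice1[OF C4_swap[OF Cb2] vs]]])
          show "continuous_on TT (\<lambda>(t, s). 0::real)" by simp
          fix t s assume ts: "t \<in> {0..pi}" "s \<in> {0..2*pi}"
          show "0 \<le> integral {u1..u2} (\<lambda>u. b2 u vs t s)"
            using integral_nonneg[OF C3_int[OF C4_slice1[OF C4_swap[OF Cb2] vs] ts]] by (simp add: b2_def)
        qed
        then show ?thesis by (simp add: SI_zero)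
      qed
      have Su0: "0 \<le> Su" using zero_u low_u[of u1] Su_ge[of u1] H(6) by auto
      have Sv0: "0 \<le> Sv" using zero_v low_v[of vs] Sv_ge[of vs] H(4) by auto
      have Cab: "C4 {u1..u2} {vs..vh} (\<lambda>u v t s. c1 * a1 u v t s + c2 * a2 u v t s)"
      proof -
        have "continuous_on ({u1..u2} \<times> {vs..vh} \<times> TT) (\<lambda>x. c1 * (\<lambda>(u,v,t,s). a1 u v t s) x + c2 * (\<lambda>(u,v,t,s). a2 u v t s) x)"
          by (intro continuous_intros Ca1 Ca2)
        then show ?thesis by (simp add: case_prod_beta)
      qed
      have T1: "sph_int (\<lambda>t s. integral {u1..u2} (\<lambda>u. integral {vs..vh} (\<lambda>v. a1 u v t s))) \<le> \<epsilon> * Su"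
      proof -
        have "sph_int (\<lambda>t s. integral {u1..u2} (\<lambda>u. integral {vs..vh} (\<lambda>v. a1 u v t s)))
            = integral {u1..u2} (\<lambda>u. sph_int (\<lambda>t s. integral {vs..vh} (\<lambda>v. a1 u v t s)))"
          by (rule SI_swap[OF P1[OF Ca1]])
        also have "\<dots> \<le> integral {u1..u2} (\<lambda>u. Su)"
        proof (rule integral_le)
          show "(\<lambda>u. sph_int (\<lambda>t s. integral {vs..vh} (\<lambda>v. a1 u v t s))) integrable_on {u1..u2}"
            by (rule integrable_continuous_interval[OF SI_param[OF P1[OF Ca1]]])
          show "(\<lambda>u. Su) integrable_on {u1..u2}" by (rule integrable_const_ivl)
          fix u assume "u \<in> {u1..u2}"
          then show "sph_int (\<lambda>t s. integral {vs..vh} (\<lambda>v. a1 u v t s)) \<le> Su"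
            using low_u Su_ge by (meson order.trans)
        qed
        also have "\<dots> = (u2 - u1) * Su" using H(6) by simp
        also have "\<dots> \<le> \<epsilon> * Su" using H(7) Su0 by (simp add: mult_right_mono)
        finally show ?thesis .
      qed
      have tb: "integral {vs..vh} (\<lambda>v. v powr p * exp (-2 * \<beta> * v)) \<le> vs powr p * exp (-2 * \<beta> * vs) / \<beta>"
      proof (rule tail_bound)
        show "0 \<le> p" using assms(7) by simp
        show "0 < vs" using vs0 by simp
        have "\<alpha> < vs" using vsv0 v0 a1 by linarith
        then have "\<alpha> * \<beta> \<le> vs * \<beta>" using b0 by (intro mult_right_mono) auto
        then show "p \<le> \<beta> * vs" using pab by (simp add: mult.commute)
        show "vs \<le> vh" using H(4) by simp
      qed (use b0 in simp)
      have T2: "sph_int (\<lambda>t s. integral {u1..u2} (\<lambda>u. integral {vs..vh} (\<lambda>v. a2 u v t s)))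
          \<le> Sv * (vs powr p * exp (-2 * \<beta> * vs) / \<beta>)"
      proof -
        have "sph_int (\<lambda>t s. integral {u1..u2} (\<lambda>u. integral {vs..vh} (\<lambda>v. a2 u v t s)))
            = sph_int (\<lambda>t s. integral {vs..vh} (\<lambda>v. integral {u1..u2} (\<lambda>u. a2 u v t s)))"
        proof (rule SI_cong_on)
          fix t s assume ts: "t \<in> {0..pi}" "s \<in> {0..2*pi}"
          show "integral {u1..u2} (\<lambda>u. integral {vs..vh} (\<lambda>v. a2 u v t s)) = integral {vs..vh} (\<lambda>v. integral {u1..u2} (\<lambda>u. a2 u v t s))"
            using swap_real[OF C4_slice_ts[OF Ca2 ts]] by simp
        qed
        also have "\<dots> = integral {vs..vh} (\<lambda>v. sph_int (\<lambda>t s. integral {u1..u2} (\<lambda>u. a2 u v t s)))"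
          using SI_swap[OF P1[OF C4_swap[OF Ca2]]] by simp
        also have "\<dots> \<le> integral {vs..vh} (\<lambda>v. (v powr p * exp (-2 * \<beta> * v)) * Sv)"
        proof (rule integral_le)
          show "(\<lambda>v. sph_int (\<lambda>t s. integral {u1..u2} (\<lambda>u. a2 u v t s))) integrable_on {vs..vh}"
            using integrable_continuous_interval[OF SI_param[OF P1[OF C4_swap[OF Ca2]]]] by simp
          show "(\<lambda>v. (v powr p * exp (-2 * \<beta> * v)) * Sv) integrable_on {vs..vh}"
            by (rule integrable_continuous_interval) (use vs0 in \<open>auto intro!: continuous_intros\<close>)
          fix v assume v: "v \<in> {vs..vh}"
          have w0: "v powr p * exp (-2 * \<beta> * v) \<ge> 0" by simp
          have "sph_int (\<lambda>t s. integral {u1..u2} (\<lambda>u. a2 u v t s))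
              = (v powr p * exp (-2 * \<beta> * v)) * sph_int (\<lambda>t s. integral {u1..u2} (\<lambda>u. b2 u v t s))"
            unfolding a2_def b2_def by (simp only: integral_mult_right SI_cmul)
          also have "\<dots> \<le> (v powr p * exp (-2 * \<beta> * v)) * Sv"
            using low_v[OF v] Sv_ge[OF v] w0 by (intro mult_left_mono) auto
          finally show "sph_int (\<lambda>t s. integral {u1..u2} (\<lambda>u. a2 u v t s)) \<le> (v powr p * exp (-2 * \<beta> * v)) * Sv" .
        qed
        also have "\<dots> = Sv * integral {vs..vh} (\<lambda>v. v powr p * exp (-2 * \<beta> * v))"
          by (simp add: mult.commute)
        also have "\<dots> \<le> Sv * (vs powr p * exp (-2 * \<beta> * vs) / \<beta>)"
          using tb Sv0 by (rule mult_left_mono)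
        finally show ?thesis .
      qed
      have "vol_int M e R (\<lambda>u v \<theta> \<phi>. \<bar>KtildeW R p (sph \<Phi>) u v \<theta> \<phi>\<bar>) u1 u2 vs vh
          \<le> sph_int (\<lambda>t s. integral {u1..u2} (\<lambda>u. integral {vs..vh} (\<lambda>v. c1 * a1 u v t s + c2 * a2 u v t s)))"
        unfolding vol_eq by (rule Mono2[OF Ckv Cab]) (rule ptw)
      also have "\<dots> = c1 * sph_int (\<lambda>t s. integral {u1..u2} (\<lambda>u. integral {vs..vh} (\<lambda>v. a1 u v t s)))
          + c2 * sph_int (\<lambda>t s. integral {u1..u2} (\<lambda>u. integral {vs..vh} (\<lambda>v. a2 u v t s)))"
        by (rule Lin2[OF Ca1 Ca2])
      also have "\<dots> \<le> c1 * (\<epsilon> * Su) + c2 * (Sv * (vs powr p * exp (-2 * \<beta> * vs) / \<beta>))"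
        using T1 T2 c10 c20 by (intro add_mono mult_left_mono) auto
      also have "\<dots> = \<delta>1 \<epsilon> * Su + \<delta>2 vs * Sv"
        unfolding \<delta>1_def \<delta>2_def by (simp add: algebra_simps)
      finally show ?thesis unfolding Su_def Sv_def .
    qed
    then show "\<forall>\<epsilon> \<Phi> vs vh u1 u2.
        \<epsilon> > 0 \<and> smooth_fun (\<Phi> :: real \<times> real \<times> real \<times> real \<times> real \<Rightarrow> real) \<and>
        vs \<ge> v_gamma \<alpha> (rstar_of R r_blue) u_wedge \<and> vh > vs \<and>
        u_wedge \<le> u1 \<and> u1 < u2 \<and> u2 - u1 \<le> \<epsilon> \<longrightarrow>
        vol_int M e R (\<lambda>u v \<theta> \<phi>. \<bar>KtildeW R p (sph \<Phi>) u v \<theta> \<phi>\<bar>) u1 u2 vs vh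
          \<le> \<delta>1 \<epsilon> * (SUP ub\<in>{u1..u2}. flux_u M e R W_u (W_v p) (sph \<Phi>) ub vs vh)
           + \<delta>2 vs * (SUP vb\<in>{vs..vh}. flux_v M e R W_u (W_v p) (sph \<Phi>) vb u1 u2)"
      by blast
  qed
qed


end
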